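(* In the setup described in the context, there exist polynomials $\rho_{i_1,\dots,i_a}\in K[X]=K[X_{ij}\mid(i,j)\in N_0]$, for $(i_1,\dots,i_a)\in N_1$, depending only on the ordered basis $B$, and signs $\varepsilon_{kl}\in\{1,-1\}$ for $(k,l)\in N_0$, such that: (a) every $C\in\mathrm{GRASS}(\sigma)$ with coordinates $(c_{ij})$ is represented (as a point of $\mathbb P(\Lambda^a\mathbf P)$) by $\sum_{(i_1,\dots,i_a)\in N_1}\rho_{i_1,\dots,i_a}(c_{ij})\,w_{i_1}\wedge\cdots\wedge w_{i_a}$, and $\rho_{d+1,\dots,d+a}=1$; (b) for $(k,l)\in N_0$, the polynomial $\hat\rho_{kl}:=\rho_{l,d+1,\dots,d+k-1,d+k+1,\dots,\dim\mathbf P}$ attached to the basis vector $b_l\wedge b'_1\wedge\cdots\wedge b'_{k-1}\wedge b'_{k+1}\wedge\cdots\wedge b'_u\wedge b''_1\wedge\cdots\wedge b''_v$ equals $\varepsilon_{kl}X_{kl}$.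
   Context: $K$ algebraically closed, $A=KQ/I$ basic finite-dimensional, $Q$ a finite quiver with vertices $e_1,\dots,e_n$, $J$ the Jacobson radical, $L+1$ the Loewy length; paths compose right to left. For $\mathbf d=(d_1,\dots,d_n)$, $d=\sum d_i$, $\mathbf P=\bigoplus_{r=1}^dAz_r$ is a projective cover of $\bigoplus_iS_i^{d_i}$ with top elements $z_r$ normed by vertices $e(r)$, $\widehat{\mathbf P}=\bigoplus_rKQz_r$, $a=\dim\mathbf P-d$; $\operatorname{Gr}(a,\mathbf P)\subseteq\mathbb P(\Lambda^a\mathbf P)$ via Plücker. A skeleton in $\widehat{\mathbf P}$ with radical layering $\mathbb S=(\mathbb S_0,\dots,\mathbb S_L)$, $\mathbb S_l=\bigoplus_iS_i^{m(l,i)}$, is a set $\sigma$ of paths $pz_r$ of length $\le L$ with exactly $m(l,i)$ paths of length $l$ ending in $e_i$, closed under initial subpaths. $\mathrm{GRASS}(\sigma)$ is the set of $A$-submodules $C\subseteq\mathbf P$ with $\underline{\dim}(\mathbf P/C)=\mathbf d$, radical layering of $\mathbf P/C$ equal to $\mathbb S$, such that the images of the paths of $\sigma$ form a basis of $\mathbf P/C$; assume $\mathrm{GRASS}(\sigma)\neq\varnothing$, so $\sigma$ is identified with a linearly independent subset $\{b_1,\dots,b_d\}$ of $\mathbf P$. A path $b'$ of length $\le L$ is $\sigma$-critical if $b'\notin\sigma$ and all its proper initial subpaths lie in $\sigma$; $\sigma(b')=\{b\in\sigma:\operatorname{length}(b)\ge\operatorname{length}(b'),\ \operatorname{end}(b)=\operatorname{end}(b')\}$.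 Choose $\sigma$-critical paths $b'_1,\dots,b'_u$ inducing a basis of $(\sum_{b'\ \sigma\text{-critical}}Kb'+\sum_jKb_j)/\sum_jKb_j$, and paths $b''_1,\dots,b''_v$ such that $B=(b_1,\dots,b_d,b'_1,\dots,b'_u,b''_1,\dots,b''_v)=(w_1,\dots,w_{\dim\mathbf P})$ is an ordered basis of $\mathbf P$ ($u+v=a$). $N_0=\{(i,j): 1\le i\le u,\ 1\le j\le d,\ b_j\in\sigma(b'_i)\}$ and $N_1=\{(i_1,\dots,i_a):1\le i_1<\dots<i_a\le\dim\mathbf P\}$; $\{w_{i_1}\wedge\cdots\wedge w_{i_a}\}_{N_1}$ is the induced basis of $\Lambda^a\mathbf P$. Every $C\in\mathrm{GRASS}(\sigma)$ is uniquely $C=\sum_{i=1}^uA(b'_i-\sum_{(i,j)\in N_0}c_{ij}b_j)$, and $(c_{ij})\in\mathbb A^{N_0}$ are its coordinates ($C\mapsto(c_{ij})$ is an isomorphism onto a closed subvariety of $\mathbb A^{N_0}$). *)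

theory Defs
  imports "HOL-Library.Poly_Mapping" "Jordan_Normal_Form.Determinant"
begin

section \<open>Quivers and paths\<close>

text \<open>Vertices e_1,...,e_n are numbered 0,...,n-1.  A path is a pair (v, as) of its
start vertex v and the list of arrows as = [alpha_k, ..., alpha_1], so that the path is
alpha_k ... alpha_1 (composition right to left; alpha_1 is traversed first).\<close>

record 'q quiver =
  nverts :: nat
  arrs :: "'q set"
  src :: "'q \<Rightarrow> nat"
  tgt :: "'q \<Rightarrow> nat"

type_synonym 'q path = "nat \<times> 'q list"

definition quiver_wf :: "'q quiver \<Rightarrow> bool" where
  "quiver_wf Q \<longleftrightarrow> finite (arrs Q) \<and>
     (\<forall>\<alpha>\<in>arrs Q. src Q \<alpha> < nverts Q \<and> tgt Q \<alpha> < nverts Q)"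

definition is_path :: "'q quiver \<Rightarrow> 'q path \<Rightarrow> bool" where
  "is_path Q p \<longleftrightarrow> fst p < nverts Q \<and> set (snd p) \<subseteq> arrs Q \<and>
     (snd p \<noteq> [] \<longrightarrow> src Q (last (snd p)) = fst p) \<and>
     (\<forall>i. Suc i < length (snd p) \<longrightarrow> src Q (snd p ! i) = tgt Q (snd p ! Suc i))"

definition pend :: "'q quiver \<Rightarrow> 'q path \<Rightarrow> nat" where
  "pend Q p = (if snd p = [] then fst p else tgt Q (hd (snd p)))"

definition plen :: "'q path \<Rightarrow> nat" where
  "plen p = length (snd p)"

text \<open>Composition p q (first q, then p).\<close>
definition pcomp :: "'q quiver \<Rightarrow> 'q path \<Rightarrow> 'q path \<Rightarrow> 'q path option" where
  "pcomp Q p q = (if fst p = pend Q q then Some (fst q, snd p @ snd q) else None)"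

text \<open>The initial subpath of length plen p - j.\<close>
definition init_sub :: "'q path \<Rightarrow> nat \<Rightarrow> 'q path" where
  "init_sub p j = (fst p, drop j (snd p))"

section \<open>Path algebra, admissible ideals\<close>

definition kq :: "'q quiver \<Rightarrow> ('q path \<Rightarrow> 'k::field) set" where
  "kq Q = {f. finite {p. f p \<noteq> 0} \<and> (\<forall>p. f p \<noteq> 0 \<longrightarrow> is_path Q p)}"

definition kq_mult :: "'q quiver \<Rightarrow> ('q path \<Rightarrow> 'k::field) \<Rightarrow> ('q path \<Rightarrow> 'k) \<Rightarrow> 'q path \<Rightarrow> 'k" where
  "kq_mult Q f g z = (\<Sum>x\<in>{x. f x \<noteq> 0}. \<Sum>y\<in>{y. g y \<noteq> 0}.
      if pcomp Q x y = Some z then f x * g y else 0)"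

text \<open>The ideal of KQ spanned by the paths of length at least m (the m-th power of the arrow ideal).\<close>
definition path_ideal :: "'q quiver \<Rightarrow> nat \<Rightarrow> ('q path \<Rightarrow> 'k::field) set" where
  "path_ideal Q m = {f \<in> kq Q. \<forall>p. f p \<noteq> 0 \<longrightarrow> m \<le> plen p}"

definition admissible_ideal :: "'q quiver \<Rightarrow> ('q path \<Rightarrow> 'k::field) set \<Rightarrow> bool" where
  "admissible_ideal Q I \<longleftrightarrow> I \<subseteq> kq Q \<and> (\<lambda>_. 0) \<in> I \<and>
     (\<forall>f\<in>I. \<forall>g\<in>I. (\<lambda>p. f p + g p) \<in> I) \<and>
     (\<forall>c f. f \<in> I \<longrightarrow> (\<lambda>p. c * f p) \<in> I) \<and>
     (\<forall>f\<in>I. \<forall>g\<in>kq Q. kq_mult Q g f \<in> I \<and> kq_mult Q f g \<in> I) \<and>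
     (\<exists>m\<ge>2. path_ideal Q m \<subseteq> I) \<and> I \<subseteq> path_ideal Q 2"

definition lincomb :: "(nat \<Rightarrow> 'k::field) \<Rightarrow> ('b \<Rightarrow> 'k) list \<Rightarrow> 'b \<Rightarrow> 'k" where
  "lincomb cs vs = (\<lambda>z. \<Sum>i<length vs. cs i * (vs ! i) z)"

definition span_list :: "('b \<Rightarrow> 'k::field) list \<Rightarrow> ('b \<Rightarrow> 'k) set" where
  "span_list vs = {lincomb cs vs | cs. True}"

definition ssum :: "('b \<Rightarrow> 'k::field) set \<Rightarrow> ('b \<Rightarrow> 'k) set \<Rightarrow> ('b \<Rightarrow> 'k) set" where
  "ssum U W = {(\<lambda>z. u z + w z) | u w. u \<in> U \<and> w \<in> W}"

definition subspace_fun :: "('b \<Rightarrow> 'k::field) set \<Rightarrow> bool" where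
  "subspace_fun U \<longleftrightarrow> (\<lambda>_. 0) \<in> U \<and> (\<forall>x\<in>U. \<forall>y\<in>U. (\<lambda>z. x z + y z) \<in> U) \<and>
     (\<forall>c. \<forall>x\<in>U. (\<lambda>z. c * x z) \<in> U)"

definition indep_mod :: "('b \<Rightarrow> 'k::field) set \<Rightarrow> ('b \<Rightarrow> 'k) list \<Rightarrow> bool" where
  "indep_mod U vs \<longleftrightarrow> (\<forall>cs. lincomb cs vs \<in> U \<longrightarrow> (\<forall>i<length vs. cs i = 0))"

definition spans_mod :: "('b \<Rightarrow> 'k::field) set \<Rightarrow> ('b \<Rightarrow> 'k) list \<Rightarrow> ('b \<Rightarrow> 'k) set \<Rightarrow> bool" where
  "spans_mod U vs W \<longleftrightarrow> (\<forall>x\<in>W. \<exists>cs. (\<lambda>z. x z - lincomb cs vs z) \<in> U)"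

text \<open>dim ((W + U) / U) = m\<close>
definition qdim :: "('b \<Rightarrow> 'k::field) set \<Rightarrow> ('b \<Rightarrow> 'k) set \<Rightarrow> nat \<Rightarrow> bool" where
  "qdim U W m \<longleftrightarrow> (\<exists>vs. length vs = m \<and> set vs \<subseteq> W \<and> indep_mod U vs \<and> spans_mod U vs W)"

section \<open>The projective module P = (+)_r A z_r, via hat P = (+)_r KQ z_r\<close>

text \<open>A "path p z_r" is a pair (p, r) with r < d and p starting at e(r).\<close>
definition is_ppath :: "'q quiver \<Rightarrow> (nat \<Rightarrow> nat) \<Rightarrow> nat \<Rightarrow> 'q path \<times> nat \<Rightarrow> bool" where
  "is_ppath Q e d b \<longleftrightarrow> is_path Q (fst b) \<and> snd b < d \<and> fst (fst b) = e (snd b)"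

definition bvec :: "'a \<Rightarrow> 'a \<Rightarrow> 'k::field" where
  "bvec b = (\<lambda>z. if z = b then 1 else 0)"

definition hatP :: "'q quiver \<Rightarrow> (nat \<Rightarrow> nat) \<Rightarrow> nat \<Rightarrow> ('q path \<times> nat \<Rightarrow> 'k::field) set" where
  "hatP Q e d = {x. finite {z. x z \<noteq> 0} \<and> (\<forall>z. x z \<noteq> 0 \<longrightarrow> is_ppath Q e d z)}"

definition kq_act :: "'q quiver \<Rightarrow> ('q path \<Rightarrow> 'k::field) \<Rightarrow> ('q path \<times> nat \<Rightarrow> 'k) \<Rightarrow> 'q path \<times> nat \<Rightarrow> 'k" where
  "kq_act Q f x = (\<lambda>(q, r). \<Sum>p\<in>{p. f p \<noteq> 0}. \<Sum>z\<in>{z. x z \<noteq> 0}.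
      if snd z = r \<and> pcomp Q p (fst z) = Some q then f p * x z else 0)"

text \<open>I hat P, so that P = hat P / I hat P.\<close>
definition IhatP :: "'q quiver \<Rightarrow> ('q path \<Rightarrow> 'k::field) set \<Rightarrow> (nat \<Rightarrow> nat) \<Rightarrow> nat \<Rightarrow> ('q path \<times> nat \<Rightarrow> 'k) set" where
  "IhatP Q I e d = {x \<in> hatP Q e d. \<forall>r<d. (\<lambda>p. x (p, r)) \<in> I}"

text \<open>A-submodules C of P, represented by their preimages in hat P (KQ-submodules containing I hat P).\<close>
definition submod_P :: "'q quiver \<Rightarrow> ('q path \<Rightarrow> 'k::field) set \<Rightarrow> (nat \<Rightarrow> nat) \<Rightarrow> nat \<Rightarrow> ('q path \<times> nat \<Rightarrow> 'k) set \<Rightarrow> bool" where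
  "submod_P Q I e d U \<longleftrightarrow> U \<subseteq> hatP Q e d \<and> subspace_fun U \<and>
     (\<forall>f\<in>kq Q. \<forall>x\<in>U. kq_act Q f x \<in> U) \<and> IhatP Q I e d \<subseteq> U"

definition gen_submod_P :: "'q quiver \<Rightarrow> ('q path \<Rightarrow> 'k::field) set \<Rightarrow> (nat \<Rightarrow> nat) \<Rightarrow> nat \<Rightarrow> ('q path \<times> nat \<Rightarrow> 'k) set \<Rightarrow> ('q path \<times> nat \<Rightarrow> 'k) set" where
  "gen_submod_P Q I e d G = \<Inter> {U. submod_P Q I e d U \<and> G \<subseteq> U}"

text \<open>e_i J^l hat P: spanned by the paths p z_r of length at least l ending in e_i.\<close>
definition layer_space :: "'q quiver \<Rightarrow> (nat \<Rightarrow> nat) \<Rightarrow> nat \<Rightarrow> nat \<Rightarrow> nat \<Rightarrow> ('q path \<times> nat \<Rightarrow> 'k::field) set" where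
  "layer_space Q e d l i = {x \<in> hatP Q e d. \<forall>z. x z \<noteq> 0 \<longrightarrow> l \<le> plen (fst z) \<and> pend Q (fst z) = i}"

section \<open>Skeleta and GRASS(sigma)\<close>

definition skeleton :: "'q quiver \<Rightarrow> (nat \<Rightarrow> nat) \<Rightarrow> nat \<Rightarrow> nat \<Rightarrow> ('q path \<times> nat) set \<Rightarrow> bool" where
  "skeleton Q e d L \<sigma> \<longleftrightarrow> (\<forall>b\<in>\<sigma>. is_ppath Q e d b \<and> plen (fst b) \<le> L) \<and>
     (\<forall>b\<in>\<sigma>. \<forall>j\<le>plen (fst b). (init_sub (fst b) j, snd b) \<in> \<sigma>)"

text \<open>m(l,i): number of paths in sigma of length l ending in e_i (the radical layering of sigma).\<close>
definition sigma_mult :: "'q quiver \<Rightarrow> ('q path \<times> nat) set \<Rightarrow> nat \<Rightarrow> nat \<Rightarrow> nat" where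
  "sigma_mult Q \<sigma> l i = card {b \<in> \<sigma>. plen (fst b) = l \<and> pend Q (fst b) = i}"

definition GRASS :: "'q quiver \<Rightarrow> ('q path \<Rightarrow> 'k::field) set \<Rightarrow> (nat \<Rightarrow> nat) \<Rightarrow> nat \<Rightarrow> (nat \<Rightarrow> nat) \<Rightarrow> nat
    \<Rightarrow> ('q path \<times> nat) set \<Rightarrow> ('q path \<times> nat \<Rightarrow> 'k) set set" where
  "GRASS Q I e d dv L \<sigma> = {U. submod_P Q I e d U \<and>
     (\<forall>i<nverts Q. qdim U (layer_space Q e d 0 i) (dv i)) \<and>
     (\<forall>l\<le>L. \<forall>i<nverts Q. qdim (ssum (layer_space Q e d (Suc l) i) U) (layer_space Q e d l i)
                                  (sigma_mult Q \<sigma> l i)) \<and>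
     (\<exists>bs. distinct bs \<and> set bs = \<sigma> \<and> indep_mod U (map bvec bs) \<and>
           spans_mod U (map bvec bs) (hatP Q e d))}"

definition sigma_critical :: "'q quiver \<Rightarrow> (nat \<Rightarrow> nat) \<Rightarrow> nat \<Rightarrow> nat \<Rightarrow> ('q path \<times> nat) set \<Rightarrow> 'q path \<times> nat \<Rightarrow> bool" where
  "sigma_critical Q e d L \<sigma> b \<longleftrightarrow> is_ppath Q e d b \<and> plen (fst b) \<le> L \<and> b \<notin> \<sigma> \<and>
     (\<forall>j. 0 < j \<and> j \<le> plen (fst b) \<longrightarrow> (init_sub (fst b) j, snd b) \<in> \<sigma>)"

definition sigma_of :: "'q quiver \<Rightarrow> ('q path \<times> nat) set \<Rightarrow> 'q path \<times> nat \<Rightarrow> ('q path \<times> nat) set" where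
  "sigma_of Q \<sigma> b' = {b \<in> \<sigma>. plen (fst b) \<ge> plen (fst b') \<and> pend Q (fst b) = pend Q (fst b')}"

section \<open>Pluecker coordinates\<close>

definition N1 :: "nat \<Rightarrow> nat \<Rightarrow> nat list set" where
  "N1 a D = {ix. length ix = a \<and> sorted_wrt (<) ix \<and> set ix \<subseteq> {1..D}}"

text \<open>The point of P(Lambda^a P) given by the C = U / I hat P (a-dimensional) is represented
by the vector sum_{N1} pi(ix) w_{is_1} wedge ... wedge w_{is_a}: pi is nonzero on N1 and a scalar
multiple of x_1 wedge ... wedge x_a for a basis x_1..x_a of C, whose coordinates with respect to the
basis (w_1..w_D) = B are the a x a minors of the coordinate matrix M.\<close>
definition pluecker_rep :: "'q quiver \<Rightarrow> ('q path \<Rightarrow> 'k::field) set \<Rightarrow> (nat \<Rightarrow> nat) \<Rightarrow> nat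
    \<Rightarrow> ('q path \<times> nat) list \<Rightarrow> nat \<Rightarrow> ('q path \<times> nat \<Rightarrow> 'k) set \<Rightarrow> (nat list \<Rightarrow> 'k) \<Rightarrow> bool" where
  "pluecker_rep Q I e d B a U \<pi> \<longleftrightarrow>
     (\<exists>ix\<in>N1 a (length B). \<pi> ix \<noteq> 0) \<and>
     (\<exists>xs M sc. length xs = a \<and> set xs \<subseteq> U \<and> indep_mod (IhatP Q I e d) xs \<and>
        spans_mod (IhatP Q I e d) xs U \<and>
        (\<forall>k<a. (\<lambda>z. (xs ! k) z - (\<Sum>t<length B. M k t * bvec (B ! t) z)) \<in> IhatP Q I e d) \<and>
        (\<forall>ix\<in>N1 a (length B). \<pi> ix = sc * det (mat a a (\<lambda>(k, s). M k (ix ! s - 1)))))"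

type_synonym 'k mpoly_nn = "((nat \<times> nat) \<Rightarrow>\<^sub>0 nat) \<Rightarrow>\<^sub>0 'k"

definition mpoly_eval :: "'k::field mpoly_nn \<Rightarrow> (nat \<times> nat \<Rightarrow> 'k) \<Rightarrow> 'k" where
  "mpoly_eval p c = (\<Sum>m\<in>Poly_Mapping.keys p. Poly_Mapping.lookup p m *
       (\<Prod>v\<in>Poly_Mapping.keys m. c v ^ Poly_Mapping.lookup m v))"

definition mpoly_vars :: "'k::field mpoly_nn \<Rightarrow> (nat \<times> nat) set" where
  "mpoly_vars p = \<Union> (Poly_Mapping.keys ` Poly_Mapping.keys p)"

definition mpoly_const :: "'k::field \<Rightarrow> 'k mpoly_nn" where
  "mpoly_const c = Poly_Mapping.single 0 c"

definition mpoly_var :: "'k::field \<Rightarrow> nat \<times> nat \<Rightarrow> 'k mpoly_nn" where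
  "mpoly_var c v = Poly_Mapping.single (Poly_Mapping.single v 1) c"

end

theory Submission
  imports Defs
begin

definition mon_eval :: "((nat \<times> nat) \<Rightarrow>\<^sub>0 nat) \<Rightarrow> (nat \<times> nat \<Rightarrow> 'k::field) \<Rightarrow> 'k" where
  "mon_eval m c = (\<Prod>v\<in>Poly_Mapping.keys m. c v ^ Poly_Mapping.lookup m v)"

lemma mon_eval_superset:
  assumes "finite S" "Poly_Mapping.keys m \<subseteq> S"
  shows "mon_eval m c = (\<Prod>v\<in>S. c v ^ Poly_Mapping.lookup m v)"
  unfolding mon_eval_def
  by (rule prod.mono_neutral_left) (use assms in \<open>auto simp: in_keys_iff\<close>)

lemma mon_eval_add: "mon_eval (m1 + m2) c = mon_eval m1 c * mon_eval m2 c"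
proof -
  let ?S = "Poly_Mapping.keys m1 \<union> Poly_Mapping.keys m2"
  have f: "finite ?S" by simp
  have "mon_eval (m1 + m2) c = (\<Prod>v\<in>?S. c v ^ Poly_Mapping.lookup (m1+m2) v)"
    by (rule mon_eval_superset[OF f]) (simp add: keys_add)
  also have "\<dots> = (\<Prod>v\<in>?S. c v ^ Poly_Mapping.lookup m1 v * c v ^ Poly_Mapping.lookup m2 v)"
    by (simp add: lookup_add power_add)
  also have "\<dots> = mon_eval m1 c * mon_eval m2 c"
    by (simp add: prod.distrib mon_eval_superset[OF f])
  finally show ?thesis .
qed

lemma mon_eval_zero[simp]: "mon_eval 0 c = 1"
  by (simp add: mon_eval_def)

lemma mpoly_eval_alt: "mpoly_eval p c = (\<Sum>m\<in>Poly_Mapping.keys p. Poly_Mapping.lookup p m * mon_eval m c)"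
  by (simp add: mpoly_eval_def mon_eval_def)

lemma mpoly_eval_add: "mpoly_eval (p + q) c = mpoly_eval p c + mpoly_eval q c"
  unfolding mpoly_eval_alt
  by (rule setsum_keys_plus_distrib) (auto simp: distrib_right)

lemma mpoly_eval_zero[simp]: "mpoly_eval 0 c = 0"
  by (simp add: mpoly_eval_def)

lemma mpoly_eval_sum: "mpoly_eval (\<Sum>i\<in>A. p i) c = (\<Sum>i\<in>A. mpoly_eval (p i) c)"
  by (induction A rule: infinite_finite_induct) (auto simp: mpoly_eval_add)

lemma mpoly_eval_single: "mpoly_eval (Poly_Mapping.single m a) c = a * mon_eval m c"
  by (cases "a = 0") (auto simp: mpoly_eval_alt)

lemma poly_mapping_expand: "p = (\<Sum>m\<in>Poly_Mapping.keys p. Poly_Mapping.single m (Poly_Mapping.lookup p m))"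
  by (rule poly_mapping_eqI)
     (auto simp: lookup_sum lookup_single when_def in_keys_iff intro: sum.neutral
           simp del: lookup_single_eq lookup_single_not_eq)

lemma mpoly_eval_mult: "mpoly_eval (p * q) c = mpoly_eval p c * mpoly_eval q c"
proof -
  have "p * q = (\<Sum>m1\<in>Poly_Mapping.keys p. \<Sum>m2\<in>Poly_Mapping.keys q.
            Poly_Mapping.single m1 (Poly_Mapping.lookup p m1) * Poly_Mapping.single m2 (Poly_Mapping.lookup q m2))"
    by (subst poly_mapping_expand[of p], subst poly_mapping_expand[of q])
       (simp add: sum_distrib_left sum_distrib_right sum.swap[of _ "Poly_Mapping.keys q"])
  then have "mpoly_eval (p * q) c = (\<Sum>m1\<in>Poly_Mapping.keys p. \<Sum>m2\<in>Poly_Mapping.keys q.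
       (Poly_Mapping.lookup p m1 * mon_eval m1 c) * (Poly_Mapping.lookup q m2 * mon_eval m2 c))"
    by (simp add: mpoly_eval_sum mult_single mpoly_eval_single mon_eval_add ac_simps)
  also have "\<dots> = mpoly_eval p c * mpoly_eval q c"
    by (simp add: mpoly_eval_alt sum_distrib_left sum_distrib_right sum.swap[of _ "Poly_Mapping.keys q"])
  finally show ?thesis .
qed

lemma mpoly_vars_add: "mpoly_vars (p + q) \<subseteq> mpoly_vars p \<union> mpoly_vars q"
  using keys_add[of p q] by (auto simp: mpoly_vars_def)

lemma mpoly_vars_mult: "mpoly_vars (p * q) \<subseteq> mpoly_vars p \<union> mpoly_vars q"
proof
  fix v assume "v \<in> mpoly_vars (p * q)"
  then obtain m where m: "m \<in> Poly_Mapping.keys (p*q)" "v \<in> Poly_Mapping.keys m" by (auto simp: mpoly_vars_def)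
  then obtain m1 m2 where "m = m1 + m2" "m1 \<in> Poly_Mapping.keys p" "m2 \<in> Poly_Mapping.keys q"
    using keys_mult[of p q] by blast
  with m(2) keys_add[of m1 m2] show "v \<in> mpoly_vars p \<union> mpoly_vars q"
    by (auto simp: mpoly_vars_def)
qed

definition polyfun :: "(nat \<times> nat) set \<Rightarrow> ((nat \<times> nat \<Rightarrow> 'k::field) \<Rightarrow> 'k) \<Rightarrow> bool" where
  "polyfun N f \<longleftrightarrow> (\<exists>p. mpoly_vars p \<subseteq> N \<and> (\<forall>c. mpoly_eval p c = f c))"

lemma polyfun_const[intro, simp]: "polyfun N (\<lambda>c. a)"
  unfolding polyfun_def
  by (rule exI[of _ "Poly_Mapping.single 0 a"]) (auto simp: mpoly_vars_def mpoly_eval_single)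

lemma polyfun_var: "v \<in> N \<Longrightarrow> polyfun N (\<lambda>c. c v)"
  unfolding polyfun_def
  by (rule exI[of _ "Poly_Mapping.single (Poly_Mapping.single v 1) 1"])
     (auto simp: mpoly_vars_def mpoly_eval_single mon_eval_def)

lemma polyfun_add[intro]: "polyfun N f \<Longrightarrow> polyfun N g \<Longrightarrow> polyfun N (\<lambda>c. f c + g c)"
  unfolding polyfun_def
  apply (elim exE conjE)
  subgoal for p q by (rule exI[of _ "p + q"]) (use mpoly_vars_add[of p q] in \<open>auto simp: mpoly_eval_add\<close>)
  done

lemma polyfun_mult[intro]: "polyfun N f \<Longrightarrow> polyfun N g \<Longrightarrow> polyfun N (\<lambda>c. f c * g c)"
  unfolding polyfun_def
  apply (elim exE conjE)
  subgoal for p q by (rule exI[of _ "p * q"]) (use mpoly_vars_mult[of p q] in \<open>auto simp: mpoly_eval_mult\<close>)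
  done

lemma polyfun_uminus[intro]: "polyfun N f \<Longrightarrow> polyfun N (\<lambda>c. - f c)"
  using polyfun_mult[OF polyfun_const[of N "-1"], of f] by simp

lemma polyfun_sum[intro]: "(\<And>i. i \<in> A \<Longrightarrow> polyfun N (f i)) \<Longrightarrow> polyfun N (\<lambda>c. \<Sum>i\<in>A. f i c)"
  by (induction A rule: infinite_finite_induct) auto

lemma polyfun_prod[intro]: "(\<And>i. i \<in> A \<Longrightarrow> polyfun N (f i)) \<Longrightarrow> polyfun N (\<lambda>c. \<Prod>i\<in>A. f i c)"
  by (induction A rule: infinite_finite_induct) auto

lemma polyfun_if[intro]: "polyfun N f \<Longrightarrow> polyfun N g \<Longrightarrow> polyfun N (\<lambda>c. if P then f c else g c)"
  by (cases P) auto

lemma det_zero_row_gen: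
  assumes B: "B \<in> carrier_mat n n" and r: "r < n" and z: "\<And>j. j < n \<Longrightarrow> B $$ (r, j) = 0"
  shows "det B = 0"
proof -
  have "signof p * (\<Prod>i = 0..<n. B $$ (i, p i)) = 0" if p: "p permutes {0..<n}" for p
  proof -
    have "p r < n" using permutes_in_image[OF p] r by auto
    then have "B $$ (r, p r) = 0" using z by auto
    then have "(\<Prod>i = 0..<n. B $$ (i, p i)) = 0"
      using r by (intro prod_zero) auto
    then show ?thesis by simp
  qed
  then show ?thesis by (simp add: det_def'[OF B])
qed

lemma det_special:
  fixes v :: "nat \<Rightarrow> 'a::comm_ring_1"
  assumes k: "1 \<le> k" "k \<le> a"
  shows "det (mat a a (\<lambda>(i,s). if s = 0 then v i else if s < k then (if i = s - 1 then 1 else 0)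
             else (if i = s then 1 else 0))) = (-1)^(k-1) * v (k-1)"
    (is "det ?A = _")
proof -
  have A: "?A \<in> carrier_mat a a" by simp
  have a0: "0 < a" using k by auto
  have "det ?A = (\<Sum>i<a. ?A $$ (i,0) * cofactor ?A i 0)"
    by (rule laplace_expansion_column[OF A a0])
  also have "\<dots> = (\<Sum>i\<in>{k-1}. ?A $$ (i,0) * cofactor ?A i 0)"
  proof (rule sum.mono_neutral_right)
    show "finite {..<a}" by simp
    show "{k-1} \<subseteq> {..<a}" using k by auto
    show "\<forall>i\<in>{..<a} - {k - 1}. ?A $$ (i, 0) * cofactor ?A i 0 = 0"
    proof
      fix i assume i: "i \<in> {..<a} - {k - 1}"
      define r where "r = (if k - 1 < i then k - 1 else k - 2)"
      have "det (mat_delete ?A i 0) = 0"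
      proof (rule det_zero_row_gen[of _ "a - 1" r])
        show "mat_delete ?A i 0 \<in> carrier_mat (a - 1) (a - 1)" by (simp add: mat_delete_def)
        show "r < a - 1" using i k by (auto simp: r_def)
        fix j assume j: "j < a - 1"
        have r1: "r < a - 1" using i k by (auto simp: r_def)
        have ro: "(if r < i then r else Suc r) = k - 1" using i k by (auto simp: r_def)
        have "mat_delete ?A i 0 $$ (r, j) = ?A $$ (if r < i then r else Suc r, Suc j)"
          unfolding mat_delete_def using r1 j by simp
        also have "\<dots> = ?A $$ (k - 1, Suc j)" using ro by simp
        also have "\<dots> = 0" using j k by auto
        finally show "mat_delete ?A i 0 $$ (r, j) = 0" .
      qed
      then show "?A $$ (i, 0) * cofactor ?A i 0 = 0" by (simp add: cofactor_def)
    qed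
  qed
  also have "\<dots> = (-1)^(k-1) * v (k-1)"
  proof -
    have "mat_delete ?A (k-1) 0 = 1\<^sub>m (a - 1)"
      by (rule eq_matI) (use k in \<open>auto simp: mat_delete_def\<close>)
    then show ?thesis using k by (simp add: cofactor_def)
  qed
  finally show ?thesis .
qed

section \<open>Subspaces and congruence\<close>

definition md :: "('b \<Rightarrow> 'k::field) set \<Rightarrow> ('b \<Rightarrow> 'k) \<Rightarrow> ('b \<Rightarrow> 'k) \<Rightarrow> bool" where
  "md U x y \<longleftrightarrow> (\<lambda>z. x z - y z) \<in> U"

context fixes U :: "('b \<Rightarrow> 'k::field) set" assumes sU: "subspace_fun U"
begin

lemma sub_0: "(\<lambda>_. 0) \<in> U" using sU by (simp add: subspace_fun_def)
lemma sub_add: "x \<in> U \<Longrightarrow> y \<in> U \<Longrightarrow> (\<lambda>z. x z + y z) \<in> U" using sU by (simp add: subspace_fun_def)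
lemma sub_smult: "x \<in> U \<Longrightarrow> (\<lambda>z. a * x z) \<in> U" using sU by (simp add: subspace_fun_def)
lemma sub_diff: "x \<in> U \<Longrightarrow> y \<in> U \<Longrightarrow> (\<lambda>z. x z - y z) \<in> U"
  using sub_add[of x "\<lambda>z. (-1) * y z"] sub_smult[of y "-1"] by simp
lemma sub_sum: "(\<And>i. i \<in> A \<Longrightarrow> f i \<in> U) \<Longrightarrow> (\<lambda>z. \<Sum>i\<in>A. f i z) \<in> U"
proof (induction A rule: infinite_finite_induct)
  case (insert x F) then show ?case using sub_add[of "f x" "\<lambda>z. \<Sum>i\<in>F. f i z"] by simp
qed (auto simp: sub_0)

lemma md_refl: "md U x x" by (simp add: md_def sub_0)
lemma md_sym: "md U x y \<Longrightarrow> md U y x"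
  unfolding md_def using sub_smult[of "\<lambda>z. x z - y z" "-1"] by simp
lemma md_trans: "md U x y \<Longrightarrow> md U y w \<Longrightarrow> md U x w"
  unfolding md_def using sub_add[of "\<lambda>z. x z - y z" "\<lambda>z. y z - w z"] by simp
lemma md_add: "md U x x' \<Longrightarrow> md U y y' \<Longrightarrow> md U (\<lambda>z. x z + y z) (\<lambda>z. x' z + y' z)"
  unfolding md_def using sub_add[of "\<lambda>z. x z - x' z" "\<lambda>z. y z - y' z"] by (simp add: algebra_simps)
lemma md_smult: "md U x y \<Longrightarrow> md U (\<lambda>z. a * x z) (\<lambda>z. a * y z)"
  unfolding md_def using sub_smult[of "\<lambda>z. x z - y z" a] by (simp add: algebra_simps)
lemma md_sum: "(\<And>i. i \<in> A \<Longrightarrow> md U (x i) (y i)) \<Longrightarrow> md U (\<lambda>z. \<Sum>i\<in>A. x i z) (\<lambda>z. \<Sum>i\<in>A. y i z)"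
proof (induction A rule: infinite_finite_induct)
  case (insert w F) then show ?case using md_add[of "x w" "y w"] by simp
qed (auto simp: md_refl)
lemma md_zero_iff: "md U x (\<lambda>_. 0) \<longleftrightarrow> x \<in> U" by (simp add: md_def)

end

section \<open>Path action\<close>

lemma supp_bvec: "{z. (bvec b :: _ \<Rightarrow> 'k::field) z \<noteq> 0} = {b}"
  by (auto simp: bvec_def)

lemma kq_act_bvec_formula:
  assumes T: "finite T" "{z. x z \<noteq> 0} \<subseteq> T"
  shows "kq_act Q (bvec q) x = (\<lambda>(q', r). \<Sum>z\<in>T. if snd z = r \<and> pcomp Q q (fst z) = Some q' then (x z :: 'k::field) else 0)"
proof -
  have "(\<Sum>z\<in>{z. x z \<noteq> 0}. if snd z = r \<and> pcomp Q q (fst z) = Some q' then x z else 0)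
      = (\<Sum>z\<in>T. if snd z = r \<and> pcomp Q q (fst z) = Some q' then x z else 0)" for q' r
    by (rule sum.mono_neutral_left) (use T in auto)
  note eq = this
  have [simp]: "(bvec q :: _ \<Rightarrow> 'k) q = 1" by (simp add: bvec_def)
  have s: "{p. (bvec q :: _ \<Rightarrow> 'k) p \<noteq> 0} = {q}" by (rule supp_bvec)
  show ?thesis
    unfolding kq_act_def s by (simp add: fun_eq_iff eq cong: if_cong)
qed

lemma kq_act_lin:
  assumes S: "finite S" and fin: "\<And>i. i \<in> S \<Longrightarrow> finite {z. x i z \<noteq> 0}"
  shows "kq_act Q (bvec q) (\<lambda>z. \<Sum>i\<in>S. f i * x i z) = (\<lambda>w. \<Sum>i\<in>S. f i * kq_act Q (bvec q) (x i) w)"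
proof -
  define T where "T = (\<Union>i\<in>S. {z. x i z \<noteq> 0})"
  have T: "finite T" using S fin by (auto simp: T_def)
  have sub: "{z. (\<Sum>i\<in>S. f i * x i z) \<noteq> 0} \<subseteq> T"
  proof
    fix z assume "z \<in> {z. (\<Sum>i\<in>S. f i * x i z) \<noteq> 0}"
    then have "(\<Sum>i\<in>S. f i * x i z) \<noteq> 0" by simp
    then obtain i where "i \<in> S" "f i * x i z \<noteq> 0" by (rule sum.not_neutral_contains_not_neutral)
    then show "z \<in> T" by (auto simp: T_def)
  qed
  have subi: "i \<in> S \<Longrightarrow> {z. x i z \<noteq> 0} \<subseteq> T" for i by (auto simp: T_def)
  show ?thesis
    apply (subst kq_act_bvec_formula[OF T sub])
    apply (rule ext)
    apply (clarsimp simp: kq_act_bvec_formula[OF T subi] sum_distrib_left)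
    apply (subst sum.swap)
    apply (rule sum.cong, simp)
    apply (auto split: if_split intro!: sum.neutral)
    done
qed

lemma kq_act_diff:
  assumes "finite {z. x z \<noteq> 0}" "finite {z. y z \<noteq> 0}"
  shows "kq_act Q (bvec q) (\<lambda>z. x z - (y z :: 'k::field)) = (\<lambda>w. kq_act Q (bvec q) x w - kq_act Q (bvec q) y w)"
  using kq_act_lin[of "{True, False}" "\<lambda>i. if i then x else y" Q q "\<lambda>i. if i then 1 else -1"] assms
  by simp

lemma kq_act_bvec_bvec:
  "kq_act Q (bvec q) (bvec b :: _ \<Rightarrow> 'k::field) =
     (case pcomp Q q (fst b) of None \<Rightarrow> (\<lambda>_. 0) | Some r \<Rightarrow> bvec (r, snd b))"
  apply (subst kq_act_bvec_formula[of "{b}"])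
    apply (auto simp: bvec_def fun_eq_iff split: option.split)
  done

lemma is_path_drop:
  assumes "is_path Q (v, as)"
  shows "is_path Q (v, drop j as)"
  using assms unfolding is_path_def
  by (auto simp: last_drop dest: in_set_dropD)

lemma pend_lt:
  assumes "quiver_wf Q" "is_path Q (v, as)"
  shows "pend Q (v, as) < nverts Q"
  using assms unfolding is_path_def quiver_wf_def pend_def
  by (cases as) auto

lemma is_path_take:
  assumes wf: "quiver_wf Q" and p: "is_path Q (v, as)"
  shows "is_path Q (pend Q (v, drop j as), take j as)"
proof -
  have pd: "is_path Q (v, drop j as)" by (rule is_path_drop[OF p])
  have "pend Q (v, drop j as) < nverts Q" by (rule pend_lt[OF wf pd])
  moreover have "set (take j as) \<subseteq> arrs Q" using p by (auto simp: is_path_def dest: in_set_takeD)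
  moreover have "src Q (last (take j as)) = pend Q (v, drop j as)" if ne: "take j as \<noteq> []"
  proof (cases "j < length as")
    case True
    have j0: "0 < j" using ne by auto
    have "last (take j as) = as ! (j - 1)" using True j0 ne by (simp add: last_conv_nth min_def)
    moreover have "drop j as \<noteq> []" using True by simp
    moreover have "hd (drop j as) = as ! j" using True by (simp add: hd_drop_conv_nth)
    moreover have "src Q (as ! (j - 1)) = tgt Q (as ! Suc (j - 1))"
      using p True j0 unfolding is_path_def by auto
    ultimately show ?thesis using j0 by (simp add: pend_def)
  next
    case False
    then have "take j as = as" "drop j as = []" by auto
    then show ?thesis using p ne by (simp add: is_path_def pend_def)
  qed
  moreover have "\<forall>i. Suc i < length (take j as) \<longrightarrow> src Q (take j as ! i) = tgt Q (take j as ! Suc i)"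
    using p unfolding is_path_def by auto
  ultimately show ?thesis unfolding is_path_def by simp
qed

lemma is_path_comp:
  assumes q: "is_path Q (w, bs)" and p: "is_path Q (v, as)" and e: "w = pend Q (v, as)"
  shows "is_path Q (v, bs @ as)"
proof -
  have "fst (v, bs @ as) < nverts Q" using p by (simp add: is_path_def)
  moreover have "set (bs @ as) \<subseteq> arrs Q" using p q by (auto simp: is_path_def)
  moreover have "src Q (last (bs @ as)) = v" if "bs @ as \<noteq> []"
  proof (cases "as = []")
    case True
    then show ?thesis using q that e by (simp add: is_path_def pend_def)
  next
    case False
    then show ?thesis using p by (simp add: is_path_def)
  qed
  moreover have "src Q ((bs @ as) ! i) = tgt Q ((bs @ as) ! Suc i)" if i: "Suc i < length (bs @ as)" for i
  proof -
    consider "Suc i < length bs" | "Suc i = length bs" | "length bs \<le> i" by linarith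
    then show ?thesis
    proof cases
      case 1 then show ?thesis using q by (simp add: is_path_def nth_append)
    next
      case 2
      then have ne: "as \<noteq> []" "bs \<noteq> []" using i by auto
      have "(bs @ as) ! i = last bs" proof -
        have li: "length bs - Suc 0 = i" using 2 by simp
        show ?thesis using 2 ne by (simp add: nth_append last_conv_nth li)
      qed
      moreover have "(bs @ as) ! Suc i = hd as" using 2 ne by (simp add: nth_append hd_conv_nth)
      moreover have "src Q (last bs) = w" using q ne by (simp add: is_path_def)
      ultimately show ?thesis using e ne by (simp add: pend_def)
    next
      case 3
      then have "(bs @ as) ! i = as ! (i - length bs)" "(bs @ as) ! Suc i = as ! Suc (i - length bs)"
        by (auto simp: nth_append Suc_diff_le)
      moreover have "Suc (i - length bs) < length as" using i 3 by auto
      ultimately show ?thesis using p by (simp add: is_path_def)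
    qed
  qed
  ultimately show ?thesis unfolding is_path_def by auto
qed

locale setup6 =
  fixes Q :: "'q quiver" and I :: "('q path \<Rightarrow> 'k::field) set"
    and e :: "nat \<Rightarrow> nat" and d L :: nat
    and \<sigma> :: "('q path \<times> nat) set"
    and bs bps bpps :: "('q path \<times> nat) list"
    and B :: "('q path \<times> nat) list" and u a :: nat and N0 :: "(nat \<times> nat) set"
  assumes quiver: "quiver_wf Q"
    and adm: "admissible_ideal Q I"
    and loewy1: "path_ideal Q (Suc L) \<subseteq> I"
    and skel: "skeleton Q e d L \<sigma>"
    and bs: "distinct bs" "set bs = \<sigma>" "length bs = d"
    and bps_crit: "\<forall>b'\<in>set bps. sigma_critical Q e d L \<sigma> b'"
    and bps_span: "spans_mod (ssum (span_list (map bvec bs)) (IhatP Q I e d)) (map bvec bps)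
                     {bvec b' | b'. sigma_critical Q e d L \<sigma> b'}"
    and bpps: "\<forall>b''\<in>set bpps. is_ppath Q e d b''"
    and B_def: "B = bs @ bps @ bpps"
    and B_indep: "indep_mod (IhatP Q I e d) (map bvec B)"
    and B_span: "spans_mod (IhatP Q I e d) (map bvec B) (hatP Q e d)"
    and u_def: "u = length bps"
    and a_def: "a = length B - d"
    and N0_def: "N0 = {(i, j). 1 \<le> i \<and> i \<le> u \<and> 1 \<le> j \<and> j \<le> d \<and>
                          bs ! (j - 1) \<in> sigma_of Q \<sigma> (bps ! (i - 1))}"
begin

abbreviation "IP \<equiv> IhatP Q I e d"

lemma I_zero: "(\<lambda>_. 0) \<in> I" using adm by (simp add: admissible_ideal_def)

lemma IP_zero: "(\<lambda>_. 0) \<in> IP"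
  by (simp add: IhatP_def hatP_def I_zero)

lemma bvec_hatP: "is_ppath Q e d b \<Longrightarrow> (bvec b :: _ \<Rightarrow> 'k) \<in> hatP Q e d"
  by (auto simp: hatP_def bvec_def)

lemma fin_bvec: "finite {z. (bvec b :: _ \<Rightarrow> 'k) z \<noteq> 0}"
  by (simp add: supp_bvec)

lemma high_IP:
  assumes p: "is_ppath Q e d p" and l: "L < plen (fst p)"
  shows "(bvec p :: _ \<Rightarrow> 'k) \<in> IP"
proof -
  have k: "(bvec (fst p) :: _ \<Rightarrow> 'k) \<in> path_ideal Q (Suc L)"
    using p l by (auto simp: path_ideal_def kq_def bvec_def is_ppath_def)
  have "(\<lambda>p'. (bvec p :: _ \<Rightarrow> 'k) (p', r)) \<in> I" for r
  proof (cases "r = snd p")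
    case True
    then have "(\<lambda>p'. (bvec p :: _ \<Rightarrow> 'k) (p', r)) = bvec (fst p)"
      by (auto simp: bvec_def fun_eq_iff prod_eq_iff)
    then show ?thesis using k loewy1 by auto
  next
    case False
    then have "(\<lambda>p'. (bvec p :: _ \<Rightarrow> 'k) (p', r)) = (\<lambda>_. 0)"
      by (auto simp: bvec_def fun_eq_iff)
    then show ?thesis using I_zero by simp
  qed
  then show ?thesis using bvec_hatP[OF p] by (simp add: IhatP_def)
qed

lemma sigma_ppath: "b \<in> \<sigma> \<Longrightarrow> is_ppath Q e d b \<and> plen (fst b) \<le> L"
  using skel by (simp add: skeleton_def)

lemma bs_in: "j < d \<Longrightarrow> bs ! j \<in> \<sigma>"
  using bs by auto

section \<open>Prefixes\<close>

definition pre :: "'q path \<times> nat \<Rightarrow> nat \<Rightarrow> 'q path \<times> nat" where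
  "pre p m = (init_sub (fst p) (plen (fst p) - m), snd p)"

definition mnp :: "'q path \<times> nat \<Rightarrow> nat" where
  "mnp p = (LEAST m. pre p m \<notin> \<sigma>)"

definition cp :: "'q path \<times> nat \<Rightarrow> 'q path \<times> nat" where
  "cp p = pre p (mnp p)"

definition tq :: "'q path \<times> nat \<Rightarrow> 'q path" where
  "tq p = (pend Q (fst (cp p)), take (plen (fst p) - mnp p) (snd (fst p)))"

definition tl :: "'q path \<times> nat \<Rightarrow> nat" where
  "tl p = plen (fst p) - mnp p"

lemma pre_full: "pre p (plen (fst p)) = p"
  by (simp add: pre_def init_sub_def)

lemma mnp:
  assumes "p \<notin> \<sigma>"
  shows "pre p (mnp p) \<notin> \<sigma>" "mnp p \<le> plen (fst p)" "\<And>m. m < mnp p \<Longrightarrow> pre p m \<in> \<sigma>"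
proof -
  have ex: "pre p (plen (fst p)) \<notin> \<sigma>" using assms pre_full by simp
  show "pre p (mnp p) \<notin> \<sigma>" unfolding mnp_def by (rule LeastI[of _ "plen (fst p)"]) (rule ex)
  show "mnp p \<le> plen (fst p)" unfolding mnp_def by (rule Least_le) (rule ex)
  show "\<And>m. m < mnp p \<Longrightarrow> pre p m \<in> \<sigma>" unfolding mnp_def using not_less_Least by blast
qed

lemma plen_pre: "m \<le> plen (fst p) \<Longrightarrow> plen (fst (pre p m)) = m"
  by (simp add: pre_def init_sub_def plen_def)

lemma tl_le: "tl p \<le> plen (fst p)" by (simp add: tl_def)

lemma cp_crit:
  assumes p: "is_ppath Q e d p" and ns: "p \<notin> \<sigma>" and l: "plen (fst p) \<le> L"
  shows "sigma_critical Q e d L \<sigma> (cp p)"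
proof -
  obtain v as r where pv: "p = ((v, as), r)" by (metis prod.collapse)
  have "is_path Q (v, drop (length as - mnp p) as)"
    using p pv by (intro is_path_drop) (auto simp: is_ppath_def)
  then have pp: "is_ppath Q e d (cp p)"
    using p pv by (simp add: cp_def pre_def init_sub_def is_ppath_def plen_def)
  have lc: "plen (fst (cp p)) = mnp p" using mnp(2)[OF ns] by (simp add: cp_def plen_pre)
  have "(init_sub (fst (cp p)) j, snd (cp p)) \<in> \<sigma>" if j: "0 < j" "j \<le> plen (fst (cp p))" for j
  proof -
    have "(init_sub (fst (cp p)) j, snd (cp p)) = pre p (mnp p - j)"
      using j lc mnp(2)[OF ns] by (simp add: cp_def pre_def init_sub_def plen_def add.commute)
    then show ?thesis using mnp(3)[OF ns, of "mnp p - j"] j lc by simp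
  qed
  then show ?thesis using pp lc mnp[OF ns] l
    by (auto simp: sigma_critical_def cp_def)
qed

lemma tq_path:
  assumes p: "is_ppath Q e d p"
  shows "is_path Q (tq p)"
proof -
  obtain v as r where pv: "p = ((v, as), r)" by (metis prod.collapse)
  have "is_path Q (pend Q (v, drop (length as - mnp p) as), take (length as - mnp p) as)"
    using p pv by (intro is_path_take quiver) (auto simp: is_ppath_def)
  then show ?thesis using pv by (simp add: tq_def cp_def pre_def init_sub_def plen_def)
qed

lemma tq_comp: "pcomp Q (tq p) (fst (cp p)) = Some (fst p)"
  by (simp add: pcomp_def tq_def cp_def pre_def init_sub_def)

lemma act_cp: "kq_act Q (bvec (tq p)) (bvec (cp p)) = (bvec p :: _ \<Rightarrow> 'k)"
  by (simp add: kq_act_bvec_bvec tq_comp) (simp add: cp_def pre_def)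

lemma length_tq: "p \<notin> \<sigma> \<Longrightarrow> length (snd (tq p)) = tl p"
  using mnp(2) by (simp add: tq_def tl_def plen_def)

lemma comp_ppath:
  assumes p: "is_ppath Q e d p" and b: "b \<in> \<sigma>" and r: "pcomp Q (tq p) (fst b) = Some r"
  shows "is_ppath Q e d (r, snd b)"
proof -
  have bp: "is_ppath Q e d b" using sigma_ppath[OF b] by simp
  obtain v as where bv: "fst b = (v, as)" by (metis prod.collapse)
  obtain w cs where tv: "tq p = (w, cs)" by (metis prod.collapse)
  have w: "w = pend Q (v, as)" and rr: "r = (v, cs @ as)" using r bv tv by (auto simp: pcomp_def split: if_splits)
  have "is_path Q (v, cs @ as)"
    using tq_path[OF p] bp bv tv w by (intro is_path_comp) (auto simp: is_ppath_def)
  then show ?thesis using bp bv rr by (simp add: is_ppath_def)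
qed

lemma tl_dec:
  assumes ns: "p \<notin> \<sigma>" and b: "b \<in> \<sigma>" and r: "pcomp Q (tq p) (fst b) = Some r"
    and ns2: "(r, snd b) \<notin> \<sigma>"
  shows "tl (r, snd b) < tl p"
proof -
  obtain v as where bv: "fst b = (v, as)" by (metis prod.collapse)
  obtain w cs where tv: "tq p = (w, cs)" by (metis prod.collapse)
  have rr: "r = (v, cs @ as)" using r bv tv by (auto simp: pcomp_def split: if_splits)
  have lcs: "length cs = tl p" using length_tq[OF ns] tv by simp
  have "pre (r, snd b) m \<in> \<sigma>" if m: "m \<le> length as" for m
  proof -
    have "pre (r, snd b) m = (init_sub (fst b) (length as - m), snd b)"
      using m rr bv by (simp add: pre_def init_sub_def plen_def)
    moreover have "length as - m \<le> plen (fst b)" using bv by (simp add: plen_def)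
    ultimately show ?thesis using skel b by (simp add: skeleton_def)
  qed
  then have "length as < mnp (r, snd b)"
    using mnp(1)[OF ns2] by (meson not_le_imp_less)
  moreover have "mnp (r, snd b) \<le> length cs + length as" using mnp(2)[OF ns2] rr by (simp add: plen_def)
  ultimately show ?thesis using rr lcs by (simp add: tl_def plen_def)
qed

end

lemma lincomb_map: "lincomb cs (map f xs) = (\<lambda>z. \<Sum>i<length xs. cs i * f (xs ! i) z)"
  by (simp add: lincomb_def)

lemma fin_sum_supp:
  assumes "finite S" "\<And>i. i \<in> S \<Longrightarrow> finite {z. x i z \<noteq> 0}"
  shows "finite {z. (\<Sum>i\<in>S. f i * x i z :: 'k::field) \<noteq> 0}"
proof (rule finite_subset)
  show "{z. (\<Sum>i\<in>S. f i * x i z) \<noteq> 0} \<subseteq> (\<Union>i\<in>S. {z. x i z \<noteq> 0})"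
  proof
    fix z assume "z \<in> {z. (\<Sum>i\<in>S. f i * x i z) \<noteq> 0}"
    then have "(\<Sum>i\<in>S. f i * x i z) \<noteq> 0" by simp
    then obtain i where "i \<in> S" "f i * x i z \<noteq> 0" by (rule sum.not_neutral_contains_not_neutral)
    then show "z \<in> (\<Union>i\<in>S. {z. x i z \<noteq> 0})" by auto
  qed
  show "finite (\<Union>i\<in>S. {z. x i z \<noteq> 0})" using assms by auto
qed

lemma kq_act_add:
  assumes "finite {z. x z \<noteq> 0}" "finite {z. y z \<noteq> 0}"
  shows "kq_act Q (bvec q) (\<lambda>z. x z + (y z :: 'k::field)) = (\<lambda>w. kq_act Q (bvec q) x w + kq_act Q (bvec q) y w)"
  using kq_act_lin[of "{True, False}" "\<lambda>i. if i then x else y" Q q "\<lambda>i. 1"] assms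
  by simp

context setup6 begin

definition alph :: "'q path \<times> nat \<Rightarrow> nat \<Rightarrow> 'k" where
  "alph b' = (SOME cs. (\<lambda>z. bvec b' z - lincomb cs (map bvec bps) z) \<in> ssum (span_list (map bvec bs)) IP)"

definition beta :: "'q path \<times> nat \<Rightarrow> nat \<Rightarrow> 'k" where
  "beta b' = (SOME cs. (\<lambda>z. bvec b' z - lincomb (alph b') (map bvec bps) z - lincomb cs (map bvec bs) z) \<in> IP)"

lemma alph_beta:
  assumes "sigma_critical Q e d L \<sigma> b'"
  shows "(\<lambda>z. bvec b' z - (\<Sum>i<u. alph b' i * bvec (bps ! i) z) - (\<Sum>j<d. beta b' j * bvec (bs ! j) z)) \<in> IP"
proof -
  have "bvec b' \<in> {bvec b' | b'. sigma_critical Q e d L \<sigma> b'}" using assms by blast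
  then have "\<exists>cs. (\<lambda>z. bvec b' z - lincomb cs (map bvec bps) z) \<in> ssum (span_list (map bvec bs)) IP"
    using bps_span unfolding spans_mod_def by blast
  then have a: "(\<lambda>z. bvec b' z - lincomb (alph b') (map bvec bps) z) \<in> ssum (span_list (map bvec bs)) IP"
    unfolding alph_def by (rule someI_ex)
  then obtain uu w where uw: "(\<lambda>z. bvec b' z - lincomb (alph b') (map bvec bps) z) = (\<lambda>z. uu z + w z)"
    "uu \<in> span_list (map bvec bs)" "w \<in> IP" by (auto simp: ssum_def)
  then obtain cs where "uu = lincomb cs (map bvec bs)" by (auto simp: span_list_def)
  with uw have "(\<lambda>z. bvec b' z - lincomb (alph b') (map bvec bps) z - lincomb cs (map bvec bs) z) = w"
    by (auto simp: fun_eq_iff)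
  with uw(3) have "\<exists>cs. (\<lambda>z. bvec b' z - lincomb (alph b') (map bvec bps) z - lincomb cs (map bvec bs) z) \<in> IP"
    by auto
  then have "(\<lambda>z. bvec b' z - lincomb (alph b') (map bvec bps) z - lincomb (beta b') (map bvec bs) z) \<in> IP"
    unfolding beta_def by (rule someI_ex)
  then show ?thesis using bs u_def by (simp add: lincomb_map)
qed

primrec gam :: "nat \<Rightarrow> 'q path \<times> nat \<Rightarrow> nat \<Rightarrow> (nat \<times> nat \<Rightarrow> 'k) \<Rightarrow> 'k" where
  "gam 0 p j c = (if p = bs ! j then 1 else 0)"
| "gam (Suc n) p j c = (if p \<in> \<sigma> then (if p = bs ! j then 1 else 0) else if L < plen (fst p) then 0 else
     (\<Sum>i<u. alph (cp p) i * (\<Sum>jj\<in>{jj. (Suc i, jj) \<in> N0}. c (Suc i, jj) *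
         (case pcomp Q (tq p) (fst (bs ! (jj - 1))) of None \<Rightarrow> 0 | Some r \<Rightarrow> gam n (r, snd (bs ! (jj - 1))) j c)))
     + (\<Sum>jj<d. beta (cp p) jj *
         (case pcomp Q (tq p) (fst (bs ! jj)) of None \<Rightarrow> 0 | Some r \<Rightarrow> gam n (r, snd (bs ! jj)) j c)))"

lemma gam_poly: "polyfun N0 (gam n p j)"
proof (induction n arbitrary: p)
  case 0 then show ?case by simp
next
  case (Suc n)
  have c: "polyfun N0 (\<lambda>c. case pcomp Q (tq p) (fst (bs ! jj)) of None \<Rightarrow> 0 | Some r \<Rightarrow> gam n (r, snd (bs ! jj)) j c)" for jj
    by (cases "pcomp Q (tq p) (fst (bs ! jj))") (auto simp: Suc.IH)
  have v: "polyfun N0 (\<lambda>c. c (Suc i, jj))" if "jj \<in> {jj. (Suc i, jj) \<in> N0}" for i jj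
    using that by (auto intro: polyfun_var)
  show ?case
    unfolding gam.simps
    by (intro polyfun_if polyfun_const polyfun_add polyfun_sum polyfun_mult c v)
qed

lemma R_sub: "{jj. (Suc i, jj) \<in> N0} \<subseteq> {1..d}"
  by (auto simp: N0_def)

lemma R_fin: "finite {jj. (Suc i, jj) \<in> N0}"
  using R_sub finite_subset by blast

lemma sum_delta_bs:
  assumes "p \<in> \<sigma>"
  shows "(\<lambda>z. \<Sum>j<d. (if p = bs ! j then 1 else 0) * bvec (bs ! j) z) = (bvec p :: _ \<Rightarrow> 'k)"
proof -
  obtain j0 where j0: "j0 < d" "bs ! j0 = p" using assms bs by (auto simp: in_set_conv_nth)
  have "(\<Sum>j<d. (if p = bs ! j then 1 else 0) * (bvec (bs ! j) z :: 'k)) = bvec p z" for z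
  proof -
    have "(\<Sum>j<d. (if p = bs ! j then 1 else 0) * (bvec (bs ! j) z :: 'k)) =
          (\<Sum>j\<in>{j0}. (if p = bs ! j then 1 else 0) * (bvec (bs ! j) z :: 'k))"
      apply (rule sum.mono_neutral_right)
      using j0 bs nth_eq_iff_index_eq[of bs] by auto
    then show ?thesis using j0 by simp
  qed
  then show ?thesis by auto
qed

lemma sum_delta_bs0:
  assumes "p \<notin> \<sigma>"
  shows "(\<lambda>z. \<Sum>j<d. (if p = bs ! j then 1 else 0) * (bvec (bs ! j) z :: 'k)) = (\<lambda>_. 0)"
proof (rule ext)
  fix z
  have "(if p = bs ! j then 1 else 0) * (bvec (bs ! j) z :: 'k) = 0" if "j < d" for j
    using assms bs_in[OF that] by auto
  then show "(\<Sum>j<d. (if p = bs ! j then 1 else 0) * (bvec (bs ! j) z :: 'k)) = 0"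
    by (intro sum.neutral) auto
qed

end

context setup6 begin

context
  fixes U :: "('q path \<times> nat \<Rightarrow> 'k) set" and c :: "nat \<times> nat \<Rightarrow> 'k"
  assumes sub: "submod_P Q I e d U"
    and gens: "\<And>i. 1 \<le> i \<Longrightarrow> i \<le> u \<Longrightarrow>
       (\<lambda>z. bvec (bps ! (i - 1)) z - (\<Sum>j\<in>{j. (i, j) \<in> N0}. c (i, j) * bvec (bs ! (j - 1)) z)) \<in> U"
begin

lemma sU: "subspace_fun U" using sub by (simp add: submod_P_def)
lemma IPU: "IP \<subseteq> U" using sub by (simp add: submod_P_def)

lemma actU: "is_path Q q \<Longrightarrow> x \<in> U \<Longrightarrow> kq_act Q (bvec q) x \<in> U"
proof -
  assume q: "is_path Q q" and x: "x \<in> U"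
  have "(bvec q :: _ \<Rightarrow> 'k) \<in> kq Q" using q by (auto simp: kq_def bvec_def)
  then show ?thesis using sub x by (simp add: submod_P_def)
qed

lemma md_act:
  assumes q: "is_path Q q" and fx: "finite {z. x z \<noteq> 0}" and fy: "finite {z. y z \<noteq> 0}"
    and m: "md U x y"
  shows "md U (kq_act Q (bvec q) x) (kq_act Q (bvec q) y)"
  using actU[OF q m[unfolded md_def]] kq_act_diff[OF fx fy, of Q q] by (simp add: md_def)

lemma gam_md:
  "is_ppath Q e d p \<Longrightarrow> p \<in> \<sigma> \<or> L < plen (fst p) \<or> tl p < n \<Longrightarrow>
    md U (bvec p) (\<lambda>z. \<Sum>j<d. gam n p j c * bvec (bs ! j) z)"
proof (induction n arbitrary: p)
  case 0
  show ?case
  proof (cases "p \<in> \<sigma>")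
    case True
    then show ?thesis using sum_delta_bs[OF True] md_refl[OF sU] by simp
  next
    case False
    then have "L < plen (fst p)" using 0 by auto
    then have "bvec p \<in> U" using high_IP[OF 0(1)] IPU by auto
    then show ?thesis using sum_delta_bs0[OF False] md_zero_iff[OF sU] by simp
  qed
next
  case (Suc n)
  note pp = Suc.prems(1)
  show ?case
  proof (cases "p \<in> \<sigma>")
    case True
    then show ?thesis using sum_delta_bs[OF True] md_refl[OF sU] by simp
  next
    case ns: False
    show ?thesis
    proof (cases "L < plen (fst p)")
      case True
      then have "bvec p \<in> U" using high_IP[OF pp] IPU by auto
      then show ?thesis using ns True md_zero_iff[OF sU] by simp
    next
      case nl: False
      then have tlp: "tl p < Suc n" using Suc.prems(2) ns by auto
      define q where "q = tq p"
      define b' where "b' = cp p"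
      define A where "A x = kq_act Q (bvec q) x" for x :: "'q path \<times> nat \<Rightarrow> 'k"
      have qp: "is_path Q q" using tq_path[OF pp] by (simp add: q_def)
      have crit: "sigma_critical Q e d L \<sigma> b'" using cp_crit[OF pp ns] nl by (simp add: b'_def)
      define X where "X jj j = (case pcomp Q q (fst (bs ! jj)) of None \<Rightarrow> 0 | Some r \<Rightarrow> gam n (r, snd (bs ! jj)) j c)" for jj j
      define R where "R i = {jj. (Suc i, jj) \<in> N0}" for i
      have gS: "gam (Suc n) p j c = (\<Sum>i<u. alph b' i * (\<Sum>jj\<in>R i. c (Suc i, jj) * X (jj - 1) j))
                  + (\<Sum>jj<d. beta b' jj * X jj j)" for j
        using ns nl by (simp add: X_def R_def q_def b'_def cong: option.case_cong)
      define lc where "lc = (\<lambda>z. \<Sum>i<u. alph b' i * bvec (bps ! i) z)"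
      define lb where "lb = (\<lambda>z. \<Sum>j<d. beta b' j * bvec (bs ! j) z)"
      have flc: "finite {z. lc z \<noteq> 0}" unfolding lc_def by (rule fin_sum_supp) (auto simp: fin_bvec)
      have flb: "finite {z. lb z \<noteq> 0}" unfolding lb_def by (rule fin_sum_supp) (auto simp: fin_bvec)
      have flcb: "finite {z. lc z + lb z \<noteq> 0}"
        by (rule finite_subset[of _ "{z. lc z \<noteq> 0} \<union> {z. lb z \<noteq> 0}"]) (use flc flb in auto)
      have s1: "md U (bvec b') (\<lambda>z. lc z + lb z)"
        using alph_beta[OF crit] IPU by (auto simp: md_def lc_def lb_def diff_diff_eq)
      have s2: "md U (A (bvec b')) (A (\<lambda>z. lc z + lb z))"
        unfolding A_def by (rule md_act[OF qp fin_bvec flcb s1])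
      have s3: "A (bvec b') = bvec p" by (simp add: A_def q_def b'_def act_cp)
      have s4: "A (\<lambda>z. lc z + lb z) = (\<lambda>w. (\<Sum>i<u. alph b' i * A (bvec (bps ! i)) w) + (\<Sum>j<d. beta b' j * A (bvec (bs ! j)) w))"
        unfolding A_def kq_act_add[OF flc flb] unfolding lc_def lb_def
        by (subst kq_act_lin, simp, simp add: fin_bvec)+ simp
      have s5: "md U (A (bvec (bps ! i))) (\<lambda>w. \<Sum>jj\<in>R i. c (Suc i, jj) * A (bvec (bs ! (jj - 1))) w)"
        if i: "i < u" for i
      proof -
        have g: "md U (bvec (bps ! i)) (\<lambda>z. \<Sum>jj\<in>R i. c (Suc i, jj) * bvec (bs ! (jj - 1)) z)"
          using gens[of "Suc i"] i by (simp add: md_def R_def)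
        have fR: "finite (R i)" using R_fin by (simp add: R_def)
        have "md U (A (bvec (bps ! i))) (A (\<lambda>z. \<Sum>jj\<in>R i. c (Suc i, jj) * bvec (bs ! (jj - 1)) z))"
          unfolding A_def by (rule md_act[OF qp fin_bvec _ g]) (rule fin_sum_supp[OF fR], simp add: fin_bvec)
        then show ?thesis unfolding A_def by (subst (asm) kq_act_lin[OF fR]) (simp_all add: fin_bvec)
      qed
      have s6: "md U (A (bvec (bs ! jj))) (\<lambda>z. \<Sum>j<d. X jj j * bvec (bs ! j) z)" if jj: "jj < d" for jj
      proof (cases "pcomp Q q (fst (bs ! jj))")
        case None
        then have "A (bvec (bs ! jj)) = (\<lambda>_. 0)" by (simp add: A_def kq_act_bvec_bvec)
        moreover have "(\<lambda>z. \<Sum>j<d. X jj j * bvec (bs ! j) z) = (\<lambda>_. 0)" using None by (simp add: X_def)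
        ultimately show ?thesis using md_refl[OF sU] by simp
      next
        case (Some r)
        have bj: "bs ! jj \<in> \<sigma>" using bs_in[OF jj] .
        have A1: "A (bvec (bs ! jj)) = bvec (r, snd (bs ! jj))" using Some by (simp add: A_def kq_act_bvec_bvec)
        have X1: "X jj j = gam n (r, snd (bs ! jj)) j c" for j using Some by (simp add: X_def)
        have pp2: "is_ppath Q e d (r, snd (bs ! jj))" using comp_ppath[OF pp bj] Some by (simp add: q_def)
        have "(r, snd (bs ! jj)) \<in> \<sigma> \<or> L < plen (fst (r, snd (bs ! jj))) \<or> tl (r, snd (bs ! jj)) < n"
          using tl_dec[OF ns bj] Some tlp by (fastforce simp: q_def)
        from Suc.IH[OF pp2 this] show ?thesis using A1 X1 by simp
      qed
      have s7: "md U (bvec p) (\<lambda>w. (\<Sum>i<u. alph b' i * (\<Sum>jj\<in>R i. c (Suc i, jj) * (\<Sum>j<d. X (jj - 1) j * bvec (bs ! j) w)))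
                     + (\<Sum>jj<d. beta b' jj * (\<Sum>j<d. X jj j * bvec (bs ! j) w)))"
      proof -
        have "md U (bvec p) (\<lambda>w. (\<Sum>i<u. alph b' i * A (bvec (bps ! i)) w) + (\<Sum>j<d. beta b' j * A (bvec (bs ! j)) w))"
          using s2 s3 s4 by simp
        moreover have "md U (\<lambda>w. (\<Sum>i<u. alph b' i * A (bvec (bps ! i)) w) + (\<Sum>j<d. beta b' j * A (bvec (bs ! j)) w))
           (\<lambda>w. (\<Sum>i<u. alph b' i * (\<Sum>jj\<in>R i. c (Suc i, jj) * (\<Sum>j<d. X (jj - 1) j * bvec (bs ! j) w)))
                     + (\<Sum>jj<d. beta b' jj * (\<Sum>j<d. X jj j * bvec (bs ! j) w)))"
        proof (rule md_add[OF sU])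
          show "md U (\<lambda>w. \<Sum>i<u. alph b' i * A (bvec (bps ! i)) w)
                  (\<lambda>w. \<Sum>i<u. alph b' i * (\<Sum>jj\<in>R i. c (Suc i, jj) * (\<Sum>j<d. X (jj - 1) j * bvec (bs ! j) w)))"
          proof (rule md_sum[OF sU], rule md_smult[OF sU])
            fix i assume i: "i \<in> {..<u}"
            have "md U (\<lambda>w. \<Sum>jj\<in>R i. c (Suc i, jj) * A (bvec (bs ! (jj - 1))) w)
                   (\<lambda>w. \<Sum>jj\<in>R i. c (Suc i, jj) * (\<Sum>j<d. X (jj - 1) j * bvec (bs ! j) w))"
            proof (rule md_sum[OF sU], rule md_smult[OF sU])
              fix jj assume "jj \<in> R i"
              then have "jj \<in> {1..d}" using R_sub[of i] unfolding R_def by blast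
              then have "jj - 1 < d" by auto
              then show "md U (A (bvec (bs ! (jj - 1)))) (\<lambda>w. \<Sum>j<d. X (jj - 1) j * bvec (bs ! j) w)"
                by (rule s6)
            qed
            then show "md U (A (bvec (bps ! i))) (\<lambda>w. \<Sum>jj\<in>R i. c (Suc i, jj) * (\<Sum>j<d. X (jj - 1) j * bvec (bs ! j) w))"
              using md_trans[OF sU s5] i by auto
          qed
          show "md U (\<lambda>w. \<Sum>j<d. beta b' j * A (bvec (bs ! j)) w)
                  (\<lambda>w. \<Sum>jj<d. beta b' jj * (\<Sum>j<d. X jj j * bvec (bs ! j) w))"
            by (rule md_sum[OF sU], rule md_smult[OF sU]) (use s6 in auto)
        qed
        ultimately show ?thesis by (rule md_trans[OF sU])
      qed
      have s8: "(\<lambda>w. (\<Sum>i<u. alph b' i * (\<Sum>jj\<in>R i. c (Suc i, jj) * (\<Sum>j<d. X (jj - 1) j * bvec (bs ! j) w)))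
                     + (\<Sum>jj<d. beta b' jj * (\<Sum>j<d. X jj j * bvec (bs ! j) w)))
             = (\<lambda>z. \<Sum>j<d. gam (Suc n) p j c * bvec (bs ! j) z)"
      proof (rule ext)
        fix z
        show "(\<Sum>i<u. alph b' i * (\<Sum>jj\<in>R i. c (Suc i, jj) * (\<Sum>j<d. X (jj - 1) j * bvec (bs ! j) z)))
                     + (\<Sum>jj<d. beta b' jj * (\<Sum>j<d. X jj j * bvec (bs ! j) z))
             = (\<Sum>j<d. gam (Suc n) p j c * bvec (bs ! j) z)"
        proof -
          define bv where "bv j = (bvec (bs ! j) z :: 'k)" for j
          have t1: "(\<Sum>i<u. alph b' i * (\<Sum>jj\<in>R i. c (Suc i, jj) * (\<Sum>j<d. X (jj - 1) j * bv j)))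
              = (\<Sum>j<d. (\<Sum>i<u. alph b' i * (\<Sum>jj\<in>R i. c (Suc i, jj) * X (jj - 1) j)) * bv j)"
          proof -
            have "(\<Sum>i<u. alph b' i * (\<Sum>jj\<in>R i. c (Suc i, jj) * (\<Sum>j<d. X (jj - 1) j * bv j)))
                = (\<Sum>i<u. \<Sum>jj\<in>R i. \<Sum>j<d. alph b' i * c (Suc i, jj) * X (jj - 1) j * bv j)"
              by (simp add: sum_distrib_left mult.assoc)
            also have "\<dots> = (\<Sum>i<u. \<Sum>j<d. \<Sum>jj\<in>R i. alph b' i * c (Suc i, jj) * X (jj - 1) j * bv j)"
              by (intro sum.cong refl sum.swap)
            also have "\<dots> = (\<Sum>j<d. \<Sum>i<u. \<Sum>jj\<in>R i. alph b' i * c (Suc i, jj) * X (jj - 1) j * bv j)"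
              by (rule sum.swap)
            also have "\<dots> = (\<Sum>j<d. (\<Sum>i<u. alph b' i * (\<Sum>jj\<in>R i. c (Suc i, jj) * X (jj - 1) j)) * bv j)"
              by (simp add: sum_distrib_left sum_distrib_right mult.assoc)
            finally show ?thesis .
          qed
          have t2: "(\<Sum>jj<d. beta b' jj * (\<Sum>j<d. X jj j * bv j)) = (\<Sum>j<d. (\<Sum>jj<d. beta b' jj * X jj j) * bv j)"
          proof -
            have "(\<Sum>jj<d. beta b' jj * (\<Sum>j<d. X jj j * bv j)) = (\<Sum>jj<d. \<Sum>j<d. beta b' jj * X jj j * bv j)"
              by (simp add: sum_distrib_left mult.assoc)
            also have "\<dots> = (\<Sum>j<d. \<Sum>jj<d. beta b' jj * X jj j * bv j)" by (rule sum.swap)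
            also have "\<dots> = (\<Sum>j<d. (\<Sum>jj<d. beta b' jj * X jj j) * bv j)"
              by (simp add: sum_distrib_right)
            finally show ?thesis .
          qed
          have "(\<Sum>i<u. alph b' i * (\<Sum>jj\<in>R i. c (Suc i, jj) * (\<Sum>j<d. X (jj - 1) j * bv j)))
                     + (\<Sum>jj<d. beta b' jj * (\<Sum>j<d. X jj j * bv j))
             = (\<Sum>j<d. gam (Suc n) p j c * bv j)"
            unfolding t1 t2 gS by (simp add: sum.distrib distrib_right)
          then show ?thesis by (simp add: bv_def)
        qed
      qed
      show ?thesis using s7 s8 by simp
    qed
  qed
qed

end
end

context setup6 begin

definition G :: "nat \<Rightarrow> nat \<Rightarrow> (nat \<times> nat \<Rightarrow> 'k) \<Rightarrow> 'k" where
  "G t j c = (if d \<le> t \<and> t < d + u then (if (t - d + 1, j + 1) \<in> N0 then c (t - d + 1, j + 1) else 0)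
              else gam (Suc L) (B ! t) j c)"

definition Mc :: "(nat \<times> nat \<Rightarrow> 'k) \<Rightarrow> nat \<Rightarrow> nat \<Rightarrow> 'k" where
  "Mc c k t = (if t < d then - G (d + k) t c else if t = d + k then 1 else 0)"

definition detf :: "nat list \<Rightarrow> (nat \<times> nat \<Rightarrow> 'k) \<Rightarrow> 'k" where
  "detf ix c = det (mat a a (\<lambda>(k, s). Mc c k (ix ! s - 1)))"

definition idl :: "nat list" where "idl = [d + 1..<length B + 1]"

definition spec :: "nat \<Rightarrow> nat \<Rightarrow> nat list" where
  "spec k l = l # [d + 1..<d + k] @ [d + k + 1..<length B + 1]"

definition rho :: "nat list \<Rightarrow> 'k mpoly_nn" where
  "rho ix = (if ix = idl then mpoly_const 1
     else if (\<exists>kl\<in>N0. ix = spec (fst kl) (snd kl))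
       then mpoly_var ((-1) ^ fst (SOME kl. kl \<in> N0 \<and> ix = spec (fst kl) (snd kl))) (SOME kl. kl \<in> N0 \<and> ix = spec (fst kl) (snd kl))
     else (SOME p. mpoly_vars p \<subseteq> N0 \<and> (\<forall>c. mpoly_eval p c = detf ix c)))"

lemma lenB: "length B = d + u + length bpps" using B_def bs u_def by simp
lemma a_eq: "a = u + length bpps" using a_def lenB by simp

lemma B_nth_bs: "t < d \<Longrightarrow> B ! t = bs ! t" using B_def bs by (simp add: nth_append_left)
lemma B_nth_bps: "d \<le> t \<Longrightarrow> t < d + u \<Longrightarrow> B ! t = bps ! (t - d)"
proof -
  assume t: "d \<le> t" "t < d + u"
  have "B ! t = (bps @ bpps) ! (t - d)" using B_def bs t by (simp add: nth_append_right)
  also have "\<dots> = bps ! (t - d)" using t u_def by (simp add: nth_append_left)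
  finally show ?thesis .
qed
lemma B_nth_bpps: "d + u \<le> t \<Longrightarrow> t < length B \<Longrightarrow> B ! t = bpps ! (t - d - u)"
proof -
  assume t: "d + u \<le> t" "t < length B"
  have "B ! t = (bps @ bpps) ! (t - d)" using B_def bs t by (simp add: nth_append_right)
  also have "\<dots> = bpps ! (t - d - u)" using t u_def by (simp add: nth_append_right)
  finally show ?thesis .
qed

lemma G_poly: "polyfun N0 (G t j)"
proof -
  have eq: "G t j = (\<lambda>c. if d \<le> t \<and> t < d + u then (if (t - d + 1, j + 1) \<in> N0 then c (t - d + 1, j + 1) else 0)
              else gam (Suc L) (B ! t) j c)" by (rule ext) (simp add: G_def)
  show ?thesis
  proof (cases "d \<le> t \<and> t < d + u")
    case True
    show ?thesis unfolding eq
      by (subst if_P[OF True], cases "(t - d + 1, j + 1) \<in> N0") (simp_all add: polyfun_var)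
  next
    case False
    show ?thesis unfolding eq by (subst if_not_P[OF False]) (rule gam_poly)
  qed
qed

lemma Mc_poly: "polyfun N0 (\<lambda>c. Mc c k t)"
  unfolding Mc_def by (intro polyfun_if polyfun_const polyfun_uminus G_poly)

lemma detf_poly: "polyfun N0 (detf ix)"
proof -
  have eq: "detf ix = (\<lambda>c. \<Sum>p\<in>{p. p permutes {0..<a}}. signof p * (\<Prod>i = 0..<a. Mc c i (ix ! p i - 1)))"
  proof (rule ext)
    fix c
    have "detf ix c = (\<Sum>p\<in>{p. p permutes {0..<a}}. signof p *
             (\<Prod>i = 0..<a. mat a a (\<lambda>(k, s). Mc c k (ix ! s - 1)) $$ (i, p i)))"
      unfolding detf_def by (rule det_def'[OF mat_carrier])
    also have "\<dots> = (\<Sum>p\<in>{p. p permutes {0..<a}}. signof p * (\<Prod>i = 0..<a. Mc c i (ix ! p i - 1)))"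
    proof (rule sum.cong[OF refl])
      fix p assume "p \<in> {p. p permutes {0..<a}}"
      then have pi: "i < a \<Longrightarrow> p i < a" for i using permutes_in_image by fastforce
      have "(\<Prod>i = 0..<a. mat a a (\<lambda>(k, s). Mc c k (ix ! s - 1)) $$ (i, p i)) = (\<Prod>i = 0..<a. Mc c i (ix ! p i - 1))"
        by (rule prod.cong[OF refl]) (simp add: pi)
      then show "signof p * (\<Prod>i = 0..<a. mat a a (\<lambda>(k, s). Mc c k (ix ! s - 1)) $$ (i, p i)) =
                 signof p * (\<Prod>i = 0..<a. Mc c i (ix ! p i - 1))" by (rule arg_cong)
    qed
    finally show "detf ix c = (\<Sum>p\<in>{p. p permutes {0..<a}}. signof p * (\<Prod>i = 0..<a. Mc c i (ix ! p i - 1)))" .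
  qed
  have "polyfun N0 (\<lambda>c. \<Sum>p\<in>{p. p permutes {0..<a}}. signof p * (\<Prod>i = 0..<a. Mc c i (ix ! p i - 1)))"
    by (rule polyfun_sum, rule polyfun_mult, rule polyfun_const, rule polyfun_prod, rule Mc_poly)
  then show ?thesis by (simp only: eq)
qed

lemma N0_bounds: "(k, l) \<in> N0 \<Longrightarrow> 1 \<le> k \<and> k \<le> u \<and> 1 \<le> l \<and> l \<le> d"
  by (simp add: N0_def)

lemma u_le_a: "u \<le> a" using a_eq by simp

lemma idl_N1: "idl \<in> N1 a (length B)"
  using lenB a_eq by (auto simp: idl_def N1_def simp del: upt_Suc)

lemma spec_nth:
  assumes "1 \<le> k" "k \<le> a" "s < a"
  shows "spec k l ! s = (if s = 0 then l else if s < k then d + s else d + s + 1)"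
proof (cases s)
  case 0 then show ?thesis by (simp add: spec_def)
next
  case (Suc s')
  have sp: "spec k l ! Suc s' = ([d + 1..<d + k] @ [d + k + 1..<length B + 1]) ! s'"
    by (simp add: spec_def del: upt_Suc)
  show ?thesis
  proof (cases "s' < k - 1")
    case True
    then show ?thesis using Suc sp assms by (simp add: nth_append del: upt_Suc)
  next
    case False
    have "s' - (k - 1) < length B + 1 - (d + k + 1)" using False Suc assms lenB a_eq by simp
    then show ?thesis using False Suc sp assms by (simp add: nth_append del: upt_Suc)
  qed
qed

lemma spec_ne_idl: "(k, l) \<in> N0 \<Longrightarrow> spec k l \<noteq> idl"
proof
  assume "(k, l) \<in> N0" "spec k l = idl"
  moreover have "l \<in> set (spec k l)" by (simp add: spec_def del: upt_Suc)
  ultimately have "l \<in> set idl" "l \<le> d" by (auto simp: N0_def)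
  then show False by (auto simp: idl_def)
qed

lemma spec_inj:
  assumes kl: "(k, l) \<in> N0" and kl': "(k', l') \<in> N0" and eq: "spec k l = spec k' l'"
  shows "k = k' \<and> l = l'"
proof -
  have l: "l = l'" using eq by (simp add: spec_def)
  have bk: "1 \<le> k" "k \<le> u" "l \<le> d" "1 \<le> k'" "k' \<le> u" using N0_bounds[OF kl] N0_bounds[OF kl'] by auto
  have D: "d + u \<le> length B" using lenB by simp
  have sk: "set (spec k l) = insert l ({d + 1..<d + k} \<union> {d + k + 1..<length B + 1})" for k l
    by (simp add: spec_def del: upt_Suc)
  have "k = k'"
  proof (rule ccontr)
    assume kk: "k \<noteq> k'"
    have "d + k \<notin> set (spec k l)" using bk unfolding sk by auto
    moreover have "d + k \<in> set (spec k' l')" using kk bk D unfolding sk by auto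
    ultimately show False using eq by simp
  qed
  then show ?thesis using l by simp
qed

lemma mpoly_eval_one: "mpoly_eval (1 :: 'k mpoly_nn) c = 1"
  using mpoly_eval_single[of 0 "1::'k" c] by simp

lemma mpoly_vars_one: "mpoly_vars (1 :: 'k mpoly_nn) = {}"
  by (simp add: mpoly_vars_def)

lemma mpoly_var_eval: "mpoly_eval (mpoly_var a0 v) c = a0 * c v"
  by (simp add: mpoly_var_def mpoly_eval_single mon_eval_def)

lemma mpoly_var_vars: "mpoly_vars (mpoly_var a0 v) \<subseteq> {v}"
  by (simp add: mpoly_var_def mpoly_vars_def)

lemma detf_idl: "detf idl c = 1"
proof -
  have "mat a a (\<lambda>(k, s). Mc c k (idl ! s - 1)) = 1\<^sub>m a"
  proof (rule eq_matI)
    fix i j assume ij: "i < dim_row (1\<^sub>m a)" "j < dim_col (1\<^sub>m a)"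
    then have "idl ! j = d + 1 + j" using lenB a_eq by (simp add: idl_def del: upt_Suc)
    then show "mat a a (\<lambda>(k, s). Mc c k (idl ! s - 1)) $$ (i, j) = 1\<^sub>m a $$ (i, j)"
      using ij by (simp add: Mc_def)
  qed simp_all
  then show ?thesis by (simp add: detf_def)
qed

lemma detf_spec:
  assumes kl: "(k, l) \<in> N0"
  shows "detf (spec k l) c = (-1) ^ k * c (k, l)"
proof -
  have bk: "1 \<le> k" "k \<le> u" "1 \<le> l" "l \<le> d" using N0_bounds[OF kl] by auto
  have ka: "k \<le> a" using bk u_le_a by simp
  define v where "v i = - G (d + i) (l - 1) c" for i
  have "mat a a (\<lambda>(i, s). Mc c i (spec k l ! s - 1)) =
        mat a a (\<lambda>(i,s). if s = 0 then v i else if s < k then (if i = s - 1 then 1 else 0)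
             else (if i = s then 1 else 0))"
  proof (rule eq_matI)
    fix i s assume ij: "i < dim_row (mat a a (\<lambda>(i,s). if s = 0 then v i else if s < k then (if i = s - 1 then (1::'k) else 0)
             else (if i = s then 1 else 0)))" "s < dim_col (mat a a (\<lambda>(i,s). if s = 0 then v i else if s < k then (if i = s - 1 then (1::'k) else 0)
             else (if i = s then 1 else 0)))"
    then have i: "i < a" and s: "s < a" by auto
    have sn: "spec k l ! s = (if s = 0 then l else if s < k then d + s else d + s + 1)"
      by (rule spec_nth[OF bk(1) ka s])
    have "Mc c i (spec k l ! s - 1) = (if s = 0 then v i else if s < k then (if i = s - 1 then 1 else 0)
             else (if i = s then 1 else 0))"
    proof (cases "s = 0")
      case True then show ?thesis using sn bk by (simp add: Mc_def v_def)
    next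
      case False
      then show ?thesis using sn by (cases "s < k") (auto simp: Mc_def)
    qed
    then show "mat a a (\<lambda>(i, s). Mc c i (spec k l ! s - 1)) $$ (i, s) =
        mat a a (\<lambda>(i,s). if s = 0 then v i else if s < k then (if i = s - 1 then 1 else 0)
             else (if i = s then 1 else 0)) $$ (i, s)" using i s by simp
  qed simp_all
  then have "detf (spec k l) c = (-1)^(k-1) * v (k - 1)"
    unfolding detf_def using det_special[OF bk(1) ka, of v] by simp
  moreover have "G (d + (k - 1)) (l - 1) c = c (k, l)"
  proof -
    have c1: "d \<le> d + (k - 1) \<and> d + (k - 1) < d + u" using bk by auto
    have c2: "(d + (k - 1) - d + 1, l - 1 + 1) = (k, l)" using bk by auto
    show ?thesis unfolding G_def by (simp only: c1 c2 if_True kl simp_thms)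
  qed
  ultimately show ?thesis using bk(1)
    by (cases k) (simp_all add: v_def)
qed

lemma rho_correct:
  assumes ix: "ix \<in> N1 a (length B)"
  shows "mpoly_eval (rho ix) c = detf ix c"
proof -
  consider "ix = idl" | "ix \<noteq> idl" "\<exists>kl\<in>N0. ix = spec (fst kl) (snd kl)"
    | "ix \<noteq> idl" "\<not> (\<exists>kl\<in>N0. ix = spec (fst kl) (snd kl))" by blast
  then show ?thesis
  proof cases
    case 1 then show ?thesis by (simp add: rho_def detf_idl mpoly_const_def mpoly_eval_one)
  next
    case 2
    define kl where "kl = (SOME kl. kl \<in> N0 \<and> ix = spec (fst kl) (snd kl))"
    have k: "kl \<in> N0 \<and> ix = spec (fst kl) (snd kl)" using 2 unfolding kl_def by (metis (mono_tags, lifting) someI_ex)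
    have r: "rho ix = mpoly_var ((-1)^fst kl) kl" unfolding rho_def kl_def using 2 by simp
    have "detf ix c = (-1) ^ fst kl * c kl" using k detf_spec[of "fst kl" "snd kl" c] by simp
    then show ?thesis by (simp only: r mpoly_var_eval)
  next
    case 3
    have ex: "\<exists>p. mpoly_vars p \<subseteq> N0 \<and> (\<forall>c. mpoly_eval p c = detf ix c)"
      using detf_poly unfolding polyfun_def by blast
    have "mpoly_vars (rho ix) \<subseteq> N0 \<and> (\<forall>c. mpoly_eval (rho ix) c = detf ix c)"
      using 3 unfolding rho_def by (simp only: if_False simp_thms) (rule someI_ex[OF ex])
    then show ?thesis by simp
  qed
qed

lemma rho_vars: "mpoly_vars (rho ix) \<subseteq> N0"
proof -
  consider "ix = idl" | "ix \<noteq> idl" "\<exists>kl\<in>N0. ix = spec (fst kl) (snd kl)"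
    | "ix \<noteq> idl" "\<not> (\<exists>kl\<in>N0. ix = spec (fst kl) (snd kl))" by blast
  then show ?thesis
  proof cases
    case 1 then show ?thesis by (simp add: rho_def mpoly_const_def mpoly_vars_one)
  next
    case 2
    define kl where "kl = (SOME kl. kl \<in> N0 \<and> ix = spec (fst kl) (snd kl))"
    have k: "kl \<in> N0 \<and> ix = spec (fst kl) (snd kl)" using 2 unfolding kl_def by (metis (mono_tags, lifting) someI_ex)
    have r: "rho ix = mpoly_var ((-1)^fst kl) kl" unfolding rho_def kl_def using 2 by simp
    show ?thesis using k mpoly_var_vars[of "(-1)^fst kl" kl] unfolding r by blast
  next
    case 3
    have ex: "\<exists>p. mpoly_vars p \<subseteq> N0 \<and> (\<forall>c. mpoly_eval p c = detf ix c)"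
      using detf_poly unfolding polyfun_def by blast
    have "mpoly_vars (rho ix) \<subseteq> N0 \<and> (\<forall>c. mpoly_eval (rho ix) c = detf ix c)"
      using 3 unfolding rho_def by (simp only: if_False simp_thms) (rule someI_ex[OF ex])
    then show ?thesis by simp
  qed
qed

lemma rho_idl: "rho idl = mpoly_const 1" by (simp add: rho_def)

lemma rho_spec:
  assumes kl: "(k, l) \<in> N0"
  shows "rho (spec k l) = mpoly_var ((-1) ^ k) (k, l)"
proof -
  define kl' where "kl' = (SOME kl'. kl' \<in> N0 \<and> spec k l = spec (fst kl') (snd kl'))"
  have ex: "\<exists>kl'\<in>N0. spec k l = spec (fst kl') (snd kl')" using kl by force
  have "kl' \<in> N0 \<and> spec k l = spec (fst kl') (snd kl')" using ex unfolding kl'_def by (metis (mono_tags, lifting) someI_ex)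
  then have "kl' = (k, l)" using spec_inj[OF kl, of "fst kl'" "snd kl'"] by (metis prod.collapse)
  then show ?thesis using ex spec_ne_idl[OF kl] by (simp add: rho_def kl'_def[symmetric])
qed

end

lemma sum_split_add: "(\<Sum>t<d + a. f t) = (\<Sum>t<d. f t) + (\<Sum>k<a. f (d + k :: nat)) "
  by (induction a) (simp_all add: add.assoc)

context setup6 begin

lemma DB: "length B = d + a" using lenB a_eq by simp

lemma sum_R:
  assumes k: "1 \<le> k"
  shows "(\<Sum>jj\<in>{jj. (k, jj) \<in> N0}. c (k, jj) * bvec (bs ! (jj - 1)) z) =
         (\<Sum>j<d. (if (k, j + 1) \<in> N0 then c (k, j + 1) else 0) * (bvec (bs ! j) z :: 'k))"
proof -
  have "(\<Sum>j<d. (if (k, j + 1) \<in> N0 then c (k, j + 1) else 0) * (bvec (bs ! j) z :: 'k))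
      = (\<Sum>j\<in>{j\<in>{..<d}. (k, Suc j) \<in> N0}. c (k, Suc j) * bvec (bs ! j) z)"
  proof -
    have "(\<Sum>j<d. (if (k, j + 1) \<in> N0 then c (k, j + 1) else 0) * (bvec (bs ! j) z :: 'k))
        = (\<Sum>j<d. (if (k, Suc j) \<in> N0 then c (k, Suc j) * bvec (bs ! j) z else 0))"
      by (rule sum.cong) auto
    also have "\<dots> = (\<Sum>j\<in>{j\<in>{..<d}. (k, Suc j) \<in> N0}. c (k, Suc j) * bvec (bs ! j) z)"
      by (rule sum.inter_filter[symmetric]) simp
    finally show ?thesis .
  qed
  also have "\<dots> = (\<Sum>jj\<in>Suc ` {j\<in>{..<d}. (k, Suc j) \<in> N0}. c (k, jj) * bvec (bs ! (jj - 1)) z)"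
    by (subst sum.reindex) auto
  also have "Suc ` {j\<in>{..<d}. (k, Suc j) \<in> N0} = {jj. (k, jj) \<in> N0}"
  proof
    show "Suc ` {j \<in> {..<d}. (k, Suc j) \<in> N0} \<subseteq> {jj. (k, jj) \<in> N0}" by auto
    show "{jj. (k, jj) \<in> N0} \<subseteq> Suc ` {j \<in> {..<d}. (k, Suc j) \<in> N0}"
    proof
      fix jj assume "jj \<in> {jj. (k, jj) \<in> N0}"
      then have jj: "(k, jj) \<in> N0" "1 \<le> jj" "jj \<le> d" using N0_bounds by auto
      then have "jj = Suc (jj - 1)" "jj - 1 < d" by auto
      then show "jj \<in> Suc ` {j \<in> {..<d}. (k, Suc j) \<in> N0}" using jj(1) by (metis (mono_tags, lifting) image_eqI lessThan_iff mem_Collect_eq)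
    qed
  qed
  finally show ?thesis by simp
qed

context
  fixes U :: "('q path \<times> nat \<Rightarrow> 'k) set" and c :: "nat \<times> nat \<Rightarrow> 'k"
  assumes sub: "submod_P Q I e d U"
    and gens: "\<And>i. 1 \<le> i \<Longrightarrow> i \<le> u \<Longrightarrow>
       (\<lambda>z. bvec (bps ! (i - 1)) z - (\<Sum>j\<in>{j. (i, j) \<in> N0}. c (i, j) * bvec (bs ! (j - 1)) z)) \<in> U"
    and bsind: "indep_mod U (map bvec bs)"
begin

lemma sU': "subspace_fun U" using sub by (simp add: submod_P_def)
lemma IPU': "IP \<subseteq> U" using sub by (simp add: submod_P_def)

lemma Bt_md:
  assumes t: "d \<le> t" "t < length B"
  shows "md U (bvec (B ! t)) (\<lambda>z. \<Sum>j<d. G t j c * bvec (bs ! j) z)"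
proof (cases "t < d + u")
  case True
  have g: "(\<lambda>z. bvec (bps ! (t - d)) z - (\<Sum>jj\<in>{jj. (Suc (t - d), jj) \<in> N0}. c (Suc (t - d), jj) * bvec (bs ! (jj - 1)) z)) \<in> U"
    using gens[of "Suc (t - d)"] True t by simp
  have "G t j c = (if (Suc (t - d), j + 1) \<in> N0 then c (Suc (t - d), j + 1) else 0)" for j
    using True t by (simp add: G_def)
  then show ?thesis using g B_nth_bps[OF t(1) True] sum_R[of "Suc (t - d)"] by (simp add: md_def)
next
  case False
  have pp: "is_ppath Q e d (B ! t)"
    using B_nth_bpps[of t] False t bpps lenB by auto
  have cond: "B ! t \<in> \<sigma> \<or> L < plen (fst (B ! t)) \<or> tl (B ! t) < Suc L"
    using tl_le[of "B ! t"] by auto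
  have "G t j c = gam (Suc L) (B ! t) j c" for j using False by (simp add: G_def)
  then show ?thesis using gam_md[OF sub gens pp cond] by simp
qed

definition xs :: "('q path \<times> nat \<Rightarrow> 'k) list" where
  "xs = map (\<lambda>k z. \<Sum>t<length B. Mc c k t * bvec (B ! t) z) [0..<a]"

lemma xs_nth: "k < a \<Longrightarrow> xs ! k = (\<lambda>z. \<Sum>t<length B. Mc c k t * bvec (B ! t) z)"
  by (simp add: xs_def)

lemma xs_nth2:
  assumes k: "k < a"
  shows "xs ! k = (\<lambda>z. bvec (B ! (d + k)) z - (\<Sum>j<d. G (d + k) j c * bvec (bs ! j) z))"
proof (rule ext)
  fix z
  have "(\<Sum>t<length B. Mc c k t * bvec (B ! t) z) =
        (\<Sum>t<d. Mc c k t * bvec (B ! t) z) + (\<Sum>i<a. Mc c k (d + i) * bvec (B ! (d + i)) z)"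
    unfolding DB by (rule sum_split_add)
  also have "(\<Sum>t<d. Mc c k t * bvec (B ! t) z) = - (\<Sum>j<d. G (d + k) j c * bvec (bs ! j) z)"
    by (simp add: Mc_def B_nth_bs sum_negf)
  also have "(\<Sum>i<a. Mc c k (d + i) * bvec (B ! (d + i)) z) = (\<Sum>i<a. (if i = k then bvec (B ! (d + k)) z else 0))"
    by (rule sum.cong) (auto simp: Mc_def)
  also have "\<dots> = bvec (B ! (d + k)) z" using k by simp
  finally show "(xs ! k) z = bvec (B ! (d + k)) z - (\<Sum>j<d. G (d + k) j c * bvec (bs ! j) z)"
    using xs_nth[OF k] by simp
qed

lemma xs_U: "set xs \<subseteq> U"
proof
  fix x assume "x \<in> set xs"
  then obtain k where k: "k < a" "x = xs ! k" by (auto simp: xs_def)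
  have "d \<le> d + k" "d + k < length B" using k DB by auto
  from Bt_md[OF this] show "x \<in> U" using k xs_nth2 by (simp add: md_def)
qed

lemma lincomb_xs: "lincomb cs xs = (\<lambda>z. \<Sum>t<length B. (\<Sum>k<a. cs k * Mc c k t) * bvec (B ! t) z)"
proof (rule ext)
  fix z
  have "lincomb cs xs z = (\<Sum>k<a. cs k * (\<Sum>t<length B. Mc c k t * bvec (B ! t) z))"
    by (simp add: lincomb_def xs_def)
  also have "\<dots> = (\<Sum>k<a. \<Sum>t<length B. cs k * Mc c k t * bvec (B ! t) z)"
    by (simp add: sum_distrib_left mult.assoc)
  also have "\<dots> = (\<Sum>t<length B. \<Sum>k<a. cs k * Mc c k t * bvec (B ! t) z)" by (rule sum.swap)
  also have "\<dots> = (\<Sum>t<length B. (\<Sum>k<a. cs k * Mc c k t) * bvec (B ! t) z)"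
    by (simp add: sum_distrib_right)
  finally show "lincomb cs xs z = (\<Sum>t<length B. (\<Sum>k<a. cs k * Mc c k t) * bvec (B ! t) z)" .
qed

lemma xs_indep: "indep_mod IP xs"
  unfolding indep_mod_def
proof (rule allI, rule impI)
  fix cs assume h: "lincomb cs xs \<in> IP"
  define \<mu> where "\<mu> t = (\<Sum>k<a. cs k * Mc c k t)" for t
  have "lincomb \<mu> (map bvec B) = lincomb cs xs"
    by (simp add: lincomb_xs lincomb_map \<mu>_def)
  then have "\<forall>t<length B. \<mu> t = 0" using B_indep h unfolding indep_mod_def by (metis length_map)
  show "\<forall>i<length xs. cs i = 0"
  proof (intro allI impI)
    fix i assume "i < length xs"
    then have i: "i < a" by (simp add: xs_def)
    have "\<mu> (d + i) = (\<Sum>k<a. (if k = i then cs k else 0))"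
      unfolding \<mu>_def by (rule sum.cong) (auto simp: Mc_def)
    also have "\<dots> = cs i" using i by simp
    finally show "cs i = 0" using \<open>\<forall>t<length B. \<mu> t = 0\<close> i DB by auto
  qed
qed

lemma xs_spans: "spans_mod IP xs U"
  unfolding spans_mod_def
proof
  fix x assume xU: "x \<in> U"
  then have "x \<in> hatP Q e d" using sub by (auto simp: submod_P_def)
  then obtain \<mu> where y: "(\<lambda>z. x z - lincomb \<mu> (map bvec B) z) \<in> IP"
    using B_span unfolding spans_mod_def by blast
  define y where "y = (\<lambda>z. x z - lincomb \<mu> (map bvec B) z)"
  define cs where "cs k = \<mu> (d + k)" for k
  define \<nu> where "\<nu> j = \<mu> j + (\<Sum>k<a. \<mu> (d + k) * G (d + k) j c)" for j
  have key: "x z - lincomb cs xs z = y z + (\<Sum>j<d. \<nu> j * bvec (bs ! j) z)" for z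
  proof -
    have lB: "lincomb \<mu> (map bvec B) z = (\<Sum>t<d. \<mu> t * bvec (bs ! t) z) + (\<Sum>k<a. \<mu> (d + k) * bvec (B ! (d + k)) z)"
      unfolding lincomb_map DB sum_split_add by (simp add: B_nth_bs)
    have lx: "lincomb cs xs z = (\<Sum>k<a. \<mu> (d + k) * bvec (B ! (d + k)) z)
              - (\<Sum>k<a. \<Sum>j<d. \<mu> (d + k) * G (d + k) j c * bvec (bs ! j) z)"
    proof -
      have "lincomb cs xs z = (\<Sum>k<a. cs k * (xs ! k) z)"
        by (simp add: lincomb_def xs_def)
      also have "\<dots> = (\<Sum>k<a. \<mu> (d + k) * (bvec (B ! (d + k)) z - (\<Sum>j<d. G (d + k) j c * bvec (bs ! j) z)))"
        by (rule sum.cong) (simp_all add: xs_nth2 cs_def)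
      also have "\<dots> = (\<Sum>k<a. \<mu> (d + k) * bvec (B ! (d + k)) z)
              - (\<Sum>k<a. \<Sum>j<d. \<mu> (d + k) * G (d + k) j c * bvec (bs ! j) z)"
        by (simp add: right_diff_distrib sum_subtractf sum_distrib_left mult.assoc)
      finally show ?thesis .
    qed
    have "(\<Sum>j<d. \<nu> j * bvec (bs ! j) z) = (\<Sum>t<d. \<mu> t * bvec (bs ! t) z) + (\<Sum>k<a. \<Sum>j<d. \<mu> (d + k) * G (d + k) j c * bvec (bs ! j) z)"
      by (simp add: \<nu>_def distrib_right sum.distrib sum_distrib_right sum.swap[of _ "{..<d}"])
    then show ?thesis using lB lx by (simp add: y_def)
  qed
  have w: "(\<lambda>z. \<Sum>j<d. \<nu> j * bvec (bs ! j) z) \<in> U"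
  proof -
    have lxU: "lincomb cs xs \<in> U"
      unfolding lincomb_def using xs_U by (intro sub_sum[OF sU'] sub_smult[OF sU']) auto
    have h: "(\<lambda>z. x z - lincomb cs xs z) \<in> U" by (rule sub_diff[OF sU' xU lxU])
    have yU: "y \<in> U" using y IPU' by (auto simp: y_def)
    have "(\<lambda>z. (x z - lincomb cs xs z) - y z) \<in> U" by (rule sub_diff[OF sU' h yU])
    then show ?thesis using key by simp
  qed
  have "\<forall>j<d. \<nu> j = 0"
    using bsind w bs unfolding indep_mod_def by (simp add: lincomb_map)
  then have "(\<lambda>z. x z - lincomb cs xs z) = y" using key by (simp add: fun_eq_iff)
  then have "(\<lambda>z. x z - lincomb cs xs z) \<in> IP" using y unfolding y_def by simp
  then show "\<exists>cs. (\<lambda>z. x z - lincomb cs xs z) \<in> IP" by blast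
qed

lemma pl: "pluecker_rep Q I e d B a U (\<lambda>ix. mpoly_eval (rho ix) c)"
  unfolding pluecker_rep_def
proof (intro conjI)
  show "\<exists>ix\<in>N1 a (length B). mpoly_eval (rho ix) c \<noteq> 0"
    using idl_N1 rho_correct[OF idl_N1, of c] detf_idl[of c] by (intro bexI[of _ idl]) simp_all
  show "\<exists>xs M sc. length xs = a \<and> set xs \<subseteq> U \<and> indep_mod IP xs \<and> spans_mod IP xs U \<and>
        (\<forall>k<a. (\<lambda>z. (xs ! k) z - (\<Sum>t<length B. M k t * bvec (B ! t) z)) \<in> IP) \<and>
        (\<forall>ix\<in>N1 a (length B). mpoly_eval (rho ix) c = sc * det (mat a a (\<lambda>(k, s). M k (ix ! s - 1))))"
  proof (intro exI conjI)
    show "length xs = a" by (simp add: xs_def)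
    show "set xs \<subseteq> U" by (rule xs_U)
    show "indep_mod IP xs" by (rule xs_indep)
    show "spans_mod IP xs U" by (rule xs_spans)
    show "\<forall>k<a. (\<lambda>z. (xs ! k) z - (\<Sum>t<length B. Mc c k t * bvec (B ! t) z)) \<in> IP"
      using IP_zero by (simp add: xs_nth)
    show "\<forall>ix\<in>N1 a (length B). mpoly_eval (rho ix) c = 1 * det (mat a a (\<lambda>(k, s). Mc c k (ix ! s - 1)))"
      using rho_correct by (simp add: detf_def)
  qed
qed

end
end

lemma lincomb_set:
  assumes dx: "distinct xs"
  shows "lincomb cs (map bvec xs) = (\<lambda>z. \<Sum>b\<in>set xs. cs (the_inv_into {..<length xs} ((!) xs) b) * (bvec b z :: 'k::field))"
proof (rule ext)
  fix z
  have inj: "inj_on ((!) xs) {..<length xs}" using dx by (simp add: inj_on_def nth_eq_iff_index_eq)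
  have im: "(!) xs ` {..<length xs} = set xs" by (auto simp: in_set_conv_nth)
  have "(\<Sum>b\<in>set xs. cs (the_inv_into {..<length xs} ((!) xs) b) * (bvec b z :: 'k))
      = (\<Sum>i<length xs. cs (the_inv_into {..<length xs} ((!) xs) (xs ! i)) * bvec (xs ! i) z)"
    unfolding im[symmetric] by (rule sum.reindex[OF inj, unfolded comp_def])
  also have "\<dots> = (\<Sum>i<length xs. cs i * bvec (xs ! i) z)"
    by (rule sum.cong) (simp_all add: the_inv_into_f_f[OF inj])
  finally show "lincomb cs (map bvec xs) z = (\<Sum>b\<in>set xs. cs (the_inv_into {..<length xs} ((!) xs) b) * (bvec b z :: 'k))"
    by (simp add: lincomb_map)
qed

lemma indep_transfer:
  assumes dx: "distinct xs" and dy: "distinct ys" and st: "set xs = set ys"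
    and ind: "indep_mod U (map (bvec :: _ \<Rightarrow> _ \<Rightarrow> 'k::field) ys)"
  shows "indep_mod U (map (bvec :: _ \<Rightarrow> _ \<Rightarrow> 'k) xs)"
  unfolding indep_mod_def
proof (rule allI, rule impI)
  fix cs assume h: "lincomb cs (map (bvec :: _ \<Rightarrow> _ \<Rightarrow> 'k) xs) \<in> U"
  define ix where "ix = the_inv_into {..<length xs} ((!) xs)"
  define iy where "iy = the_inv_into {..<length ys} ((!) ys)"
  have injx: "inj_on ((!) xs) {..<length xs}" using dx by (simp add: inj_on_def nth_eq_iff_index_eq)
  have injy: "inj_on ((!) ys) {..<length ys}" using dy by (simp add: inj_on_def nth_eq_iff_index_eq)
  have imy: "b \<in> set ys \<Longrightarrow> iy b < length ys \<and> ys ! iy b = b" for b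
  proof -
    assume "b \<in> set ys"
    then obtain i where i: "i < length ys" "ys ! i = b" by (auto simp: in_set_conv_nth)
    then show ?thesis using the_inv_into_f_f[OF injy, of i] by (auto simp: iy_def)
  qed
  define cs' where "cs' i = cs (ix (ys ! i))" for i
  have "lincomb cs' (map bvec ys) = (\<lambda>z. \<Sum>b\<in>set ys. cs' (iy b) * (bvec b z :: 'k))"
    using lincomb_set[OF dy] by (simp add: iy_def)
  also have "\<dots> = (\<lambda>z. \<Sum>b\<in>set xs. cs (ix b) * (bvec b z :: 'k))"
    using imy st by (auto simp: cs'_def intro!: sum.cong)
  also have "\<dots> = lincomb cs (map bvec xs)" by (simp only: lincomb_set[OF dx] ix_def)
  finally have "lincomb cs' (map bvec ys) \<in> U" using h by simp
  then have z: "\<forall>i<length ys. cs' i = 0" using ind unfolding indep_mod_def by (metis length_map)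
  show "\<forall>i<length (map (bvec :: _ \<Rightarrow> _ \<Rightarrow> 'k) xs). cs i = 0"
  proof (intro allI impI)
    fix j assume "j < length (map (bvec :: _ \<Rightarrow> _ \<Rightarrow> 'k) xs)"
    then have j: "j < length xs" by simp
    then have "xs ! j \<in> set ys" using st by auto
    then have "cs' (iy (xs ! j)) = 0" using z imy by auto
    moreover have "ix (ys ! iy (xs ! j)) = j"
      using imy[OF \<open>xs ! j \<in> set ys\<close>] the_inv_into_f_f[OF injx] j by (simp add: ix_def)
    ultimately show "cs j = 0" by (simp add: cs'_def)
  qed
qed

theorem lemma6p3:
  fixes Q :: "'q quiver" and I :: "('q path \<Rightarrow> 'k::field) set"
    and e dv :: "nat \<Rightarrow> nat" and d L :: nat
    and \<sigma> :: "('q path \<times> nat) set"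
    and bs bps bpps :: "('q path \<times> nat) list"
    and B :: "('q path \<times> nat) list" and u a :: nat and N0 :: "(nat \<times> nat) set"
  assumes alg_closed: "\<forall>p :: 'k poly. 0 < degree p \<longrightarrow> (\<exists>x. poly p x = 0)"
    and quiver: "quiver_wf Q"
    and adm: "admissible_ideal Q I"
    and loewy: "path_ideal Q (Suc L) \<subseteq> I" "\<not> path_ideal Q L \<subseteq> I"
    and d_def: "d = (\<Sum>i<nverts Q. dv i)"
    and e_vert: "\<forall>r<d. e r < nverts Q"
    and e_count: "\<forall>i<nverts Q. card {r. r < d \<and> e r = i} = dv i"
    and skel: "skeleton Q e d L \<sigma>"
    and nonempty: "GRASS Q I e d dv L \<sigma> \<noteq> {}"
    and bs: "distinct bs" "set bs = \<sigma>" "length bs = d"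
    and bps_crit: "\<forall>b'\<in>set bps. sigma_critical Q e d L \<sigma> b'"
    and bps_indep: "indep_mod (ssum (span_list (map bvec bs)) (IhatP Q I e d)) (map bvec bps)"
    and bps_span: "spans_mod (ssum (span_list (map bvec bs)) (IhatP Q I e d)) (map bvec bps)
                     {bvec b' | b'. sigma_critical Q e d L \<sigma> b'}"
    and bpps: "\<forall>b''\<in>set bpps. is_ppath Q e d b''"
    and B_def: "B = bs @ bps @ bpps"
    and B_basis: "indep_mod (IhatP Q I e d) (map bvec B)"
                 "spans_mod (IhatP Q I e d) (map bvec B) (hatP Q e d)"
    and u_def: "u = length bps"
    and a_def: "a = length B - d"
    and N0_def: "N0 = {(i, j). 1 \<le> i \<and> i \<le> u \<and> 1 \<le> j \<and> j \<le> d \<and>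
                          bs ! (j - 1) \<in> sigma_of Q \<sigma> (bps ! (i - 1))}"
  shows "\<exists>(\<rho> :: nat list \<Rightarrow> 'k mpoly_nn) (\<epsilon> :: nat \<times> nat \<Rightarrow> 'k).
     (\<forall>ix\<in>N1 a (length B). mpoly_vars (\<rho> ix) \<subseteq> N0) \<and>
     (\<forall>U\<in>GRASS Q I e d dv L \<sigma>. \<forall>c :: nat \<times> nat \<Rightarrow> 'k.
        U = gen_submod_P Q I e d
              {(\<lambda>z. bvec (bps ! (i - 1)) z - (\<Sum>j\<in>{j. (i, j) \<in> N0}. c (i, j) * bvec (bs ! (j - 1)) z))
                | i. 1 \<le> i \<and> i \<le> u}
        \<longrightarrow> pluecker_rep Q I e d B a U (\<lambda>ix. mpoly_eval (\<rho> ix) c)) \<and>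
     \<rho> [d + 1..<length B + 1] = mpoly_const 1 \<and>
     (\<forall>(k, l)\<in>N0. \<epsilon> (k, l) \<in> {1, -1} \<and>
        \<rho> (l # [d + 1..<d + k] @ [d + k + 1..<length B + 1]) = mpoly_var (\<epsilon> (k, l)) (k, l))"
  proof -
  interpret S: setup6 Q I e d L \<sigma> bs bps bpps B u a N0
    by unfold_locales (fact quiver adm loewy(1) skel bs(1) bs(2) bs(3) bps_crit bps_span bpps B_def
        B_basis(1) B_basis(2) u_def a_def N0_def)+
  show ?thesis
  proof (rule exI[of _ S.rho], rule exI[of _ "\<lambda>kl. (-1) ^ fst kl"], intro conjI)
    show "\<forall>ix\<in>N1 a (length B). mpoly_vars (S.rho ix) \<subseteq> N0" using S.rho_vars by blast
    show "S.rho [d + 1..<length B + 1] = mpoly_const 1" using S.rho_idl by (simp add: S.idl_def)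
    show "\<forall>(k, l)\<in>N0. (-1) ^ fst (k, l) \<in> {1, -1 :: 'k} \<and>
        S.rho (l # [d + 1..<d + k] @ [d + k + 1..<length B + 1]) = mpoly_var ((-1) ^ fst (k, l)) (k, l)"
    proof (intro ballI, clarify)
      fix k l assume kl: "(k, l) \<in> N0"
      have "(-1) ^ k \<in> {1, -1 :: 'k}" by (cases "even k") auto
      then show "(-1) ^ fst (k, l) \<in> {1, -1 :: 'k} \<and>
        S.rho (l # [d + 1..<d + k] @ [d + k + 1..<length B + 1]) = mpoly_var ((-1) ^ fst (k, l)) (k, l)"
        using S.rho_spec[OF kl] by (simp add: S.spec_def)
    qed
    show "\<forall>U\<in>GRASS Q I e d dv L \<sigma>. \<forall>c :: nat \<times> nat \<Rightarrow> 'k.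
        U = gen_submod_P Q I e d
              {(\<lambda>z. bvec (bps ! (i - 1)) z - (\<Sum>j\<in>{j. (i, j) \<in> N0}. c (i, j) * bvec (bs ! (j - 1)) z))
                | i. 1 \<le> i \<and> i \<le> u}
        \<longrightarrow> pluecker_rep Q I e d B a U (\<lambda>ix. mpoly_eval (S.rho ix) c)"
    proof (intro ballI allI impI)
      fix U and c :: "nat \<times> nat \<Rightarrow> 'k"
      assume UG: "U \<in> GRASS Q I e d dv L \<sigma>"
      define Gs where "Gs = {(\<lambda>z. bvec (bps ! (i - 1)) z - (\<Sum>j\<in>{j. (i, j) \<in> N0}. c (i, j) * bvec (bs ! (j - 1)) z))
                | i. 1 \<le> i \<and> i \<le> u}"
      assume Ueq: "U = gen_submod_P Q I e d
              {(\<lambda>z. bvec (bps ! (i - 1)) z - (\<Sum>j\<in>{j. (i, j) \<in> N0}. c (i, j) * bvec (bs ! (j - 1)) z))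
                | i. 1 \<le> i \<and> i \<le> u}"
      have sub: "submod_P Q I e d U" using UG by (simp add: GRASS_def)
      have "U = \<Inter> {W. submod_P Q I e d W \<and> Gs \<subseteq> W}" using Ueq by (simp only: gen_submod_P_def Gs_def)
      then have GU: "Gs \<subseteq> U" by blast
      have gens: "\<And>i. 1 \<le> i \<Longrightarrow> i \<le> u \<Longrightarrow>
       (\<lambda>z. bvec (bps ! (i - 1)) z - (\<Sum>j\<in>{j. (i, j) \<in> N0}. c (i, j) * bvec (bs ! (j - 1)) z)) \<in> U"
        using GU by (auto simp: Gs_def)
      obtain bs' where bs': "distinct bs'" "set bs' = \<sigma>" "indep_mod U (map bvec bs')"
        using UG by (auto simp: GRASS_def)
      have bsind: "indep_mod U (map bvec bs)"
        by (rule indep_transfer[OF bs(1) bs'(1) _ bs'(3)]) (simp add: bs(2) bs'(2))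
      show "pluecker_rep Q I e d B a U (\<lambda>ix. mpoly_eval (S.rho ix) c)"
        by (rule S.pl[OF sub gens bsind])
    qed
  qed
qed

end
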